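(* Assume the standing setting and let $a_0$ be a smooth function of $(t,x)\in[0,\tau[\times\mathbb R^d$, $u_0(t,x,y)=a_0(t,x)\chi_n(y,\nabla_x\phi(t,x))$. Then, at every $(t,x)\in[0,\tau[\times\mathbb R^d$, the solvability condition $$\int_Y\overline{\chi_n(y,\nabla_x\phi(t,x))}\Big(L_1u_0-\lambda(t)|u_0|^{2\sigma}u_0\Big)dy=0$$ is equivalent to the transport equation $$\partial_ta_0+\mathcal La_0-\beta(t,x)a_0=i\kappa(t,x)|a_0|^{2\sigma}a_0 .$$
   Context: Standing setting. $d\ge1$, $\sigma\in\mathbb N$. $\Gamma$ is the lattice generated by a basis of $\mathbb R^d$, $Y$ its centered fundamental domain, $\langle f,g\rangle_{L^2(Y)}=\int_Y\overline fg\,dy$. $V_\Gamma\in C^\infty(\mathbb R^d;\mathbb R)$ is $\Gamma$-periodic, $U\in C^\infty(\mathbb R^d;\mathbb R)$, $\lambda\in C^\infty(\mathbb R;\mathbb R)$. For $k\in\mathbb R^d$, $H_\Gamma(k)=\frac12(-i\nabla_y+k)^2+V_\Gamma(y)$ on $\Gamma$-periodic functions, eigenvalues $E_1(k)\le E_2(k)\le\dots$ with $L^2(Y)$-orthonormal eigenfunctions $\chi_m(y,k)$; the band $E_n$ is simple and isolated for all $k$, $E_n,\chi_n$ smooth in $k$. $\phi\in C^\infty([0,\tau[\times\mathbb R^d;\mathbb R)$ solves $\partial_t\phi+E_n(\nabla_x\phi)+U(x)=0$. $L_1u=i\partial_tu+i\nabla_x\phi\cdot\nabla_xu+\frac i2\Delta_x\phi\,u+\sum_{l}\partial_{x_l}\partial_{y_l}u$.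 $\beta(t,x)=\langle\chi_n(\cdot,\nabla_x\phi),\nabla_k\chi_n(\cdot,\nabla_x\phi)\rangle_{L^2(Y)}\cdot\nabla U(x)$; $\kappa(t,x)=-\lambda(t)\int_Y|\chi_n(y,\nabla_x\phi(t,x))|^{2\sigma+2}dy$; $\mathcal La=\nabla_kE_n(\nabla_x\phi)\cdot\nabla_xa+\frac12\operatorname{div}_x(\nabla_kE_n(\nabla_x\phi))a$. *)

theory Defs
  imports "HOL-Analysis.Analysis"
begin

primrec dderiv :: "'a::euclidean_space set \<Rightarrow> 'a list \<Rightarrow> ('a \<Rightarrow> 'b::real_normed_vector) \<Rightarrow> 'a \<Rightarrow> 'b" where
  "dderiv S [] f = f"
| "dderiv S (v # vs) f = (\<lambda>x. frechet_derivative (dderiv S vs f) (at x within S) v)"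

definition smooth_on :: "'a::euclidean_space set \<Rightarrow> ('a \<Rightarrow> 'b::real_normed_vector) \<Rightarrow> bool" where
  "smooth_on S f \<longleftrightarrow> (\<forall>vs. \<forall>x\<in>S. dderiv S vs f differentiable (at x within S))"

definition pd :: "(real^'d \<Rightarrow> 'b::real_normed_vector) \<Rightarrow> real^'d \<Rightarrow> 'd \<Rightarrow> 'b" where
  "pd f x l = vector_derivative (\<lambda>s. f (x + s *\<^sub>R axis l 1)) (at 0)"

definition grad :: "(real^'d \<Rightarrow> real) \<Rightarrow> real^'d \<Rightarrow> real^'d" where
  "grad f x = (\<chi> l. pd f x l)"

definition lap :: "(real^'d \<Rightarrow> 'b::real_normed_vector) \<Rightarrow> real^'d \<Rightarrow> 'b" where
  "lap f x = (\<Sum>l\<in>UNIV. pd (\<lambda>x'. pd f x' l) x l)"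

text \<open>Time derivative on [0,tau[ (one-sided at t = 0).\<close>
definition dt :: "real \<Rightarrow> (real \<Rightarrow> 'b::real_normed_vector) \<Rightarrow> real \<Rightarrow> 'b" where
  "dt \<tau> g t = vector_derivative g (at t within {0..<\<tau>})"

definition lattice :: "('d::finite \<Rightarrow> real^'d) \<Rightarrow> (real^'d) set" where
  "lattice b = {(\<Sum>i\<in>UNIV. of_int (m i) *\<^sub>R b i) | m. True}"

definition fund_dom :: "('d::finite \<Rightarrow> real^'d) \<Rightarrow> (real^'d) set" where
  "fund_dom b = {(\<Sum>i\<in>UNIV. c i *\<^sub>R b i) | c. \<forall>i. -1/2 \<le> c i \<and> c i < 1/2}"

definition periodic :: "('d::finite \<Rightarrow> real^'d) \<Rightarrow> (real^'d \<Rightarrow> 'b) \<Rightarrow> bool" where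
  "periodic b f \<longleftrightarrow> (\<forall>y \<gamma>. \<gamma> \<in> lattice b \<longrightarrow> f (y + \<gamma>) = f y)"

definition l2inner :: "('d::finite \<Rightarrow> real^'d) \<Rightarrow> (real^'d \<Rightarrow> complex) \<Rightarrow> (real^'d \<Rightarrow> complex) \<Rightarrow> complex" where
  "l2inner b f g = integral (fund_dom b) (\<lambda>y. cnj (f y) * g y)"

definition Dk :: "real^'d \<Rightarrow> 'd \<Rightarrow> (real^'d \<Rightarrow> complex) \<Rightarrow> real^'d \<Rightarrow> complex" where
  "Dk k l f = (\<lambda>y. - \<i> * pd f y l + complex_of_real (k $ l) * f y)"

definition Hk :: "(real^'d \<Rightarrow> real) \<Rightarrow> real^'d \<Rightarrow> (real^'d \<Rightarrow> complex) \<Rightarrow> real^'d \<Rightarrow> complex" where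
  "Hk V k f = (\<lambda>y. (1/2) * (\<Sum>l\<in>UNIV. Dk k l (Dk k l f) y) + complex_of_real (V y) * f y)"

definition nl :: "nat \<Rightarrow> complex \<Rightarrow> complex" where
  "nl \<sigma> u = complex_of_real (cmod u ^ (2 * \<sigma>)) * u"

definition L1 :: "real \<Rightarrow> (real \<Rightarrow> real^'d \<Rightarrow> real) \<Rightarrow> (real \<Rightarrow> real^'d \<Rightarrow> real^'d \<Rightarrow> complex)
    \<Rightarrow> real \<Rightarrow> real^'d \<Rightarrow> real^'d \<Rightarrow> complex" where
  "L1 \<tau> \<phi> u t x y =
     \<i> * dt \<tau> (\<lambda>s. u s x y) t
   + \<i> * (\<Sum>l\<in>UNIV. complex_of_real (pd (\<phi> t) x l) * pd (\<lambda>x'. u t x' y) x l)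
   + (\<i> / 2) * complex_of_real (lap (\<phi> t) x) * u t x y
   + (\<Sum>l\<in>UNIV. pd (\<lambda>x'. pd (\<lambda>y'. u t x' y') y l) x l)"

definition beta :: "('d::finite \<Rightarrow> real^'d) \<Rightarrow> (real^'d \<Rightarrow> real^'d \<Rightarrow> complex) \<Rightarrow> (real \<Rightarrow> real^'d \<Rightarrow> real)
    \<Rightarrow> (real^'d \<Rightarrow> real) \<Rightarrow> real \<Rightarrow> real^'d \<Rightarrow> complex" where
  "beta b chin \<phi> U t x =
     (\<Sum>l\<in>UNIV. l2inner b (\<lambda>y. chin y (grad (\<phi> t) x)) (\<lambda>y. pd (chin y) (grad (\<phi> t) x) l)
                 * complex_of_real (pd U x l))"

definition kappa :: "('d::finite \<Rightarrow> real^'d) \<Rightarrow> nat \<Rightarrow> (real \<Rightarrow> real) \<Rightarrow> (real^'d \<Rightarrow> real^'d \<Rightarrow> complex)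
    \<Rightarrow> (real \<Rightarrow> real^'d \<Rightarrow> real) \<Rightarrow> real \<Rightarrow> real^'d \<Rightarrow> real" where
  "kappa b \<sigma> lam chin \<phi> t x =
     - lam t * integral (fund_dom b) (\<lambda>y. cmod (chin y (grad (\<phi> t) x)) ^ (2 * \<sigma> + 2))"

definition Lop :: "(real^'d \<Rightarrow> real) \<Rightarrow> (real \<Rightarrow> real^'d \<Rightarrow> real) \<Rightarrow> (real \<Rightarrow> real^'d \<Rightarrow> complex)
    \<Rightarrow> real \<Rightarrow> real^'d \<Rightarrow> complex" where
  "Lop En \<phi> a t x =
     (\<Sum>l\<in>UNIV. complex_of_real (pd En (grad (\<phi> t) x) l) * pd (a t) x l)
   + (1/2) * complex_of_real (\<Sum>l\<in>UNIV. pd (\<lambda>x'. pd En (grad (\<phi> t) x') l) x l) * a t x"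

end

theory Submission
  imports Defs
begin

lemma dderiv_append: "dderiv S vs (dderiv S [v] f) = dderiv S (vs @ [v]) f"
  by (induction vs) auto

lemma dderiv_single: "dderiv S [v] f = (\<lambda>x. frechet_derivative f (at x within S) v)"
  by simp

lemma smooth_differentiable: "smooth_on S f \<Longrightarrow> x \<in> S \<Longrightarrow> f differentiable (at x within S)"
  unfolding smooth_on_def by (metis dderiv.simps(1))

lemma smooth_has_derivative: "smooth_on S f \<Longrightarrow> x \<in> S \<Longrightarrow>
   (f has_derivative frechet_derivative f (at x within S)) (at x within S)"
  using smooth_differentiable frechet_derivative_works by blast

lemma smooth_D: "smooth_on S f \<Longrightarrow> smooth_on S (\<lambda>x. frechet_derivative f (at x within S) v)"
  unfolding smooth_on_def
proof (intro allI ballI)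
  fix vs x assume "\<forall>vs. \<forall>x\<in>S. dderiv S vs f differentiable at x within S" "x \<in> S"
  then have "dderiv S (vs @ [v]) f differentiable at x within S" by blast
  then show "dderiv S vs (\<lambda>x. frechet_derivative f (at x within S) v) differentiable at x within S"
    using dderiv_append[of S vs v f] by simp
qed

lemma smooth_continuous: "smooth_on S f \<Longrightarrow> x \<in> S \<Longrightarrow> continuous (at x within S) f"
  using smooth_differentiable differentiable_imp_continuous_within by blast

lemma line_vd:
  assumes "(F has_derivative F') (at (p + r *\<^sub>R w) within S)"
    and "\<And>r. r \<in> T \<Longrightarrow> p + r *\<^sub>R w \<in> S"
  shows "((\<lambda>r. F (p + r *\<^sub>R w)) has_vector_derivative F' w) (at r within T)"
proof -
  have d1: "((\<lambda>r. p + r *\<^sub>R w) has_derivative (\<lambda>d. d *\<^sub>R w)) (at r within T)"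
    by (auto intro!: derivative_eq_intros)
  have "(F has_derivative F') (at (p + r *\<^sub>R w) within (\<lambda>r. p + r *\<^sub>R w) ` T)"
    by (rule has_derivative_subset[OF assms(1)]) (use assms(2) in auto)
  from has_derivative_in_compose[OF d1 this]
  have "((\<lambda>r. F (p + r *\<^sub>R w)) has_derivative (\<lambda>d. F' (d *\<^sub>R w))) (at r within T)"
    by (simp add: o_def)
  moreover have "F' (d *\<^sub>R w) = d *\<^sub>R F' w" for d
    using assms(1) has_derivative_bounded_linear linear_scale linear_simps(5) by blast
  ultimately show ?thesis unfolding has_vector_derivative_def by simp
qed

lemma smooth_line_vd:
  assumes "smooth_on S F" "\<And>r. r \<in> T \<Longrightarrow> p + r *\<^sub>R w \<in> S" "r \<in> T"
  shows "((\<lambda>r. F (p + r *\<^sub>R w)) has_vector_derivative dderiv S [w] F (p + r *\<^sub>R w)) (at r within T)"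
  using line_vd[OF smooth_has_derivative[OF assms(1) assms(2)[OF assms(3)]] assms(2)] by simp

lemma schwarz_aux:
  fixes f :: "'a::euclidean_space \<Rightarrow> 'b::real_normed_vector"
  assumes sm: "smooth_on S f" and x: "x \<in> S" and d: "\<delta> > 0"
    and sub: "\<And>a b. 0 \<le> a \<Longrightarrow> a \<le> \<delta> \<Longrightarrow> 0 \<le> b \<Longrightarrow> b \<le> \<delta> \<Longrightarrow> x + a *\<^sub>R u + b *\<^sub>R v \<in> S"
  shows "((\<lambda>h. (f (x + h *\<^sub>R u + h *\<^sub>R v) - f (x + h *\<^sub>R u) - f (x + h *\<^sub>R v) + f x) /\<^sub>R h\<^sup>2)
           \<longlongrightarrow> dderiv S [v,u] f x) (at_right 0)"
proof (rule tendstoI)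
  fix \<epsilon> :: real assume \<epsilon>: "\<epsilon> > 0"
  define e where "e = \<epsilon> / 10"
  have e: "e > 0" using \<epsilon> by (simp add: e_def)
  define g1 where "g1 = dderiv S [u] f"
  define g2 where "g2 = dderiv S [v,u] f"
  define L where "L = g2 x"
  have sm1: "smooth_on S g1" unfolding g1_def using smooth_D[OF sm] by simp
  have g2eq: "g2 = dderiv S [v] g1" unfolding g1_def g2_def by simp
  have sm2: "smooth_on S g2" unfolding g2eq using smooth_D[OF sm1] by simp
  have "continuous (at x within S) g2" using smooth_continuous[OF sm2 x] .
  then obtain \<eta> where \<eta>: "\<eta> > 0" "\<And>z. z \<in> S \<Longrightarrow> dist z x < \<eta> \<Longrightarrow> dist (g2 z) L < e"
    unfolding continuous_within_eps_delta L_def using e by blast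
  define h0 where "h0 = min \<delta> (\<eta> / (norm u + norm v + 1))"
  have pn: "norm u + norm v + 1 > 0" by (smt (verit) norm_ge_zero)
  have h0: "h0 > 0" using d \<eta> pn by (simp add: h0_def)
  show "\<forall>\<^sub>F h in at_right 0. dist ((f (x + h *\<^sub>R u + h *\<^sub>R v) - f (x + h *\<^sub>R u) - f (x + h *\<^sub>R v) + f x) /\<^sub>R h\<^sup>2) (dderiv S [v,u] f x) < \<epsilon>"
    unfolding eventually_at_right_field
  proof (intro exI[of _ h0] conjI allI impI)
    show "0 < h0" by fact
    fix h :: real assume hh0: "0 < h" and hh1: "h < h0"
    then have hh: "0 < h \<and> h < h0" by simp
    then have hpos: "h > 0" and hd: "h \<le> \<delta>" by (auto simp: h0_def)
    have hn: "h * (norm u + norm v + 1) < \<eta>"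
      using hh pn by (simp add: h0_def pos_less_divide_eq)
    have inS: "x + a *\<^sub>R u + b *\<^sub>R v \<in> S" if "a \<in> {0..h}" "b \<in> {0..h}" for a b
      using sub that hd by auto
    have close: "dist (g2 (x + a *\<^sub>R u + b *\<^sub>R v)) L < e" if "a \<in> {0..h}" "b \<in> {0..h}" for a b
    proof (rule \<eta>(2)[OF inS[OF that]])
      have "norm (a *\<^sub>R u + b *\<^sub>R v) \<le> \<bar>a\<bar> * norm u + \<bar>b\<bar> * norm v"
        by (metis norm_scaleR norm_triangle_ineq)
      also have "\<dots> \<le> h * norm u + h * norm v"
        using that by (auto intro!: add_mono mult_right_mono)
      also have "\<dots> < \<eta>" using hn by (simp add: algebra_simps)
        (smt (verit, ccfv_SIG) hpos mult_pos_pos)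
      finally show "dist (x + a *\<^sub>R u + b *\<^sub>R v) x < \<eta>" by (simp add: dist_norm add.assoc)
    qed
    have stepA: "norm (g1 (x + a *\<^sub>R u + h *\<^sub>R v) - g1 (x + a *\<^sub>R u) - h *\<^sub>R L) \<le> 3 * h * e"
      if a: "a \<in> {0..h}" for a
    proof -
      have vd: "((\<lambda>b. g1 ((x + a *\<^sub>R u) + b *\<^sub>R v)) has_vector_derivative g2 ((x + a *\<^sub>R u) + b *\<^sub>R v)) (at b within {0..h})"
        if "b \<in> {0..h}" for b
        using smooth_line_vd[OF sm1, of "{0..h}" "x + a *\<^sub>R u" v b] inS[OF a] that unfolding g2eq by auto
      have B: "norm (g2 ((x + a *\<^sub>R u) + b *\<^sub>R v) - g2 ((x + a *\<^sub>R u) + 0 *\<^sub>R v)) \<le> 2 * e" if "b \<in> {0..h}" for b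
      proof -
        have "dist (g2 ((x + a *\<^sub>R u) + b *\<^sub>R v)) L < e" using close[OF a that] by (simp add: add.assoc)
        moreover have "dist (g2 ((x + a *\<^sub>R u) + 0 *\<^sub>R v)) L < e" using close[OF a, of 0] hpos by simp
        ultimately show ?thesis by (smt (verit) dist_norm dist_triangle2)
      qed
      have "norm (g1 ((x + a *\<^sub>R u) + h *\<^sub>R v) - g1 ((x + a *\<^sub>R u) + 0 *\<^sub>R v) - (h - 0) *\<^sub>R g2 ((x + a *\<^sub>R u) + 0 *\<^sub>R v)) \<le> norm (h - 0) * (2 * e)"
        by (rule vector_differentiable_bound_linearization[OF vd _ B]) (use hpos in \<open>auto simp: closed_segment_eq_real_ivl\<close>)
      then have 1: "norm (g1 (x + a *\<^sub>R u + h *\<^sub>R v) - g1 (x + a *\<^sub>R u) - h *\<^sub>R g2 (x + a *\<^sub>R u)) \<le> h * (2 * e)"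
        using hpos by (simp add: add.assoc)
      have "dist (g2 (x + a *\<^sub>R u)) L < e" using close[OF a, of 0] hpos by simp
      then have 2: "norm (h *\<^sub>R g2 (x + a *\<^sub>R u) - h *\<^sub>R L) \<le> h * e"
        using hpos by (simp add: dist_norm scaleR_diff_right[symmetric])
      have "norm (g1 (x + a *\<^sub>R u + h *\<^sub>R v) - g1 (x + a *\<^sub>R u) - h *\<^sub>R L)
         \<le> norm (g1 (x + a *\<^sub>R u + h *\<^sub>R v) - g1 (x + a *\<^sub>R u) - h *\<^sub>R g2 (x + a *\<^sub>R u)) + norm (h *\<^sub>R g2 (x + a *\<^sub>R u) - h *\<^sub>R L)"
        by (rule order_trans[OF _ norm_triangle_ineq]) (simp add: algebra_simps)
      also have "\<dots> \<le> h * (2 * e) + h * e" using 1 2 by linarith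
      finally show ?thesis by (simp add: algebra_simps)
    qed
    define \<phi> where "\<phi> a = f (x + a *\<^sub>R u + h *\<^sub>R v) - f (x + a *\<^sub>R u)" for a
    define \<phi>' where "\<phi>' a = g1 (x + a *\<^sub>R u + h *\<^sub>R v) - g1 (x + a *\<^sub>R u)" for a
    have vdB: "(\<phi> has_vector_derivative \<phi>' a) (at a within {0..h})" if "a \<in> {0..h}" for a
    proof -
      have 1: "((\<lambda>a. f ((x + h *\<^sub>R v) + a *\<^sub>R u)) has_vector_derivative g1 ((x + h *\<^sub>R v) + a *\<^sub>R u)) (at a within {0..h})"
        using smooth_line_vd[OF sm, of "{0..h}" "x + h *\<^sub>R v" u a] inS that hpos unfolding g1_def
        by (auto simp: algebra_simps)
      have 2: "((\<lambda>a. f (x + a *\<^sub>R u)) has_vector_derivative g1 (x + a *\<^sub>R u)) (at a within {0..h})"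
        using smooth_line_vd[OF sm, of "{0..h}" "x" u a] inS[of _ 0] that hpos unfolding g1_def
        by auto
      show ?thesis unfolding \<phi>_def \<phi>'_def using has_vector_derivative_diff[OF 1 2]
        by (simp add: algebra_simps)
    qed
    have BB: "norm (\<phi>' a - \<phi>' 0) \<le> 6 * h * e" if "a \<in> {0..h}" for a
    proof -
      have "norm (\<phi>' a - h *\<^sub>R L) \<le> 3 * h * e" using stepA[OF that] by (simp add: \<phi>'_def)
      moreover have "norm (\<phi>' 0 - h *\<^sub>R L) \<le> 3 * h * e" using stepA[of 0] hpos by (simp add: \<phi>'_def)
      moreover have "norm (\<phi>' a - \<phi>' 0) \<le> norm (\<phi>' a - h *\<^sub>R L) + norm (\<phi>' 0 - h *\<^sub>R L)"
        using norm_triangle_ineq4[of "\<phi>' a - h *\<^sub>R L" "\<phi>' 0 - h *\<^sub>R L"] by simp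
      ultimately show ?thesis by linarith
    qed
    have "norm (\<phi> h - \<phi> 0 - (h - 0) *\<^sub>R \<phi>' 0) \<le> norm (h - 0) * (6 * h * e)"
      by (rule vector_differentiable_bound_linearization[OF vdB _ BB]) (use hpos in \<open>auto simp: closed_segment_eq_real_ivl\<close>)
    then have C1: "norm (\<phi> h - \<phi> 0 - h *\<^sub>R \<phi>' 0) \<le> 6 * h * h * e" using hpos by simp
    have C2: "norm (h *\<^sub>R \<phi>' 0 - h *\<^sub>R (h *\<^sub>R L)) \<le> 3 * h * h * e"
    proof -
      have "norm (\<phi>' 0 - h *\<^sub>R L) \<le> 3 * h * e" using stepA[of 0] hpos by (simp add: \<phi>'_def)
      moreover have "h *\<^sub>R \<phi>' 0 - h *\<^sub>R (h *\<^sub>R L) = h *\<^sub>R (\<phi>' 0 - h *\<^sub>R L)"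
        by (simp add: scaleR_diff_right)
      ultimately show ?thesis using hpos
        by (metis (no_types, opaque_lifting) abs_of_pos mult.assoc mult.left_commute mult_left_mono norm_scaleR less_imp_le)
    qed
    have "norm (\<phi> h - \<phi> 0 - (h * h) *\<^sub>R L) \<le> norm (\<phi> h - \<phi> 0 - h *\<^sub>R \<phi>' 0) + norm (h *\<^sub>R \<phi>' 0 - h *\<^sub>R (h *\<^sub>R L))"
      by (rule order_trans[OF _ norm_triangle_ineq]) (simp add: algebra_simps)
    also have "\<dots> \<le> 9 * (h * h) * e" using C1 C2 by simp
    finally have C: "norm (\<phi> h - \<phi> 0 - (h * h) *\<^sub>R L) \<le> 9 * (h * h) * e" .
    have eqD: "(f (x + h *\<^sub>R u + h *\<^sub>R v) - f (x + h *\<^sub>R u) - f (x + h *\<^sub>R v) + f x) = \<phi> h - \<phi> 0"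
      by (simp add: \<phi>_def algebra_simps)
    have "dist ((\<phi> h - \<phi> 0) /\<^sub>R h\<^sup>2) L = norm (\<phi> h - \<phi> 0 - (h * h) *\<^sub>R L) / (h * h)"
    proof -
      have "(\<phi> h - \<phi> 0) /\<^sub>R h\<^sup>2 - L = (1 / (h * h)) *\<^sub>R (\<phi> h - \<phi> 0 - (h * h) *\<^sub>R L)"
        using hpos by (simp add: power2_eq_square scaleR_diff_right inverse_eq_divide)
      then show ?thesis using hpos by (simp add: dist_norm)
    qed
    also have "\<dots> \<le> 9 * e" using C hpos by (simp add: divide_le_eq mult.commute mult.left_commute)
    also have "\<dots> < \<epsilon>" using \<epsilon> by (simp add: e_def)
    finally show "dist ((f (x + h *\<^sub>R u + h *\<^sub>R v) - f (x + h *\<^sub>R u) - f (x + h *\<^sub>R v) + f x) /\<^sub>R h\<^sup>2) (dderiv S [v,u] f x) < \<epsilon>"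
      unfolding eqD by (simp only: L_def g2_def)
  qed
qed

lemma schwarz:
  fixes f :: "'a::euclidean_space \<Rightarrow> 'b::real_normed_vector"
  assumes sm: "smooth_on S f" and x: "x \<in> S" and d: "\<delta> > 0"
    and sub: "\<And>a b. 0 \<le> a \<Longrightarrow> a \<le> \<delta> \<Longrightarrow> 0 \<le> b \<Longrightarrow> b \<le> \<delta> \<Longrightarrow> x + a *\<^sub>R u + b *\<^sub>R v \<in> S"
  shows "dderiv S [v,u] f x = dderiv S [u,v] f x"
proof -
  have 1: "((\<lambda>h. (f (x + h *\<^sub>R u + h *\<^sub>R v) - f (x + h *\<^sub>R u) - f (x + h *\<^sub>R v) + f x) /\<^sub>R h\<^sup>2)
           \<longlongrightarrow> dderiv S [v,u] f x) (at_right 0)"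
    by (rule schwarz_aux[OF sm x d sub])
  have sub': "\<And>a b. 0 \<le> a \<Longrightarrow> a \<le> \<delta> \<Longrightarrow> 0 \<le> b \<Longrightarrow> b \<le> \<delta> \<Longrightarrow> x + a *\<^sub>R v + b *\<^sub>R u \<in> S"
    using sub by (metis add.assoc add.commute)
  have 2: "((\<lambda>h. (f (x + h *\<^sub>R v + h *\<^sub>R u) - f (x + h *\<^sub>R v) - f (x + h *\<^sub>R u) + f x) /\<^sub>R h\<^sup>2)
           \<longlongrightarrow> dderiv S [u,v] f x) (at_right 0)"
    by (rule schwarz_aux[OF sm x d sub'])
  have "(\<lambda>h. (f (x + h *\<^sub>R v + h *\<^sub>R u) - f (x + h *\<^sub>R v) - f (x + h *\<^sub>R u) + f x) /\<^sub>R h\<^sup>2)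
      = (\<lambda>h. (f (x + h *\<^sub>R u + h *\<^sub>R v) - f (x + h *\<^sub>R u) - f (x + h *\<^sub>R v) + f x) /\<^sub>R h\<^sup>2)"
    by (simp add: algebra_simps)
  with 2 have 3: "((\<lambda>h. (f (x + h *\<^sub>R u + h *\<^sub>R v) - f (x + h *\<^sub>R u) - f (x + h *\<^sub>R v) + f x) /\<^sub>R h\<^sup>2)
           \<longlongrightarrow> dderiv S [u,v] f x) (at_right 0)" by simp
  show ?thesis using tendsto_unique[OF _ 1 3] by simp
qed

definition Tb :: "('d::finite \<Rightarrow> real^'d) \<Rightarrow> real^'d \<Rightarrow> real^'d" where
  "Tb b c = (\<Sum>i\<in>UNIV. (c $ i) *\<^sub>R b i)"

lemma linear_Tb: "linear (Tb b)"
  unfolding Tb_def by (intro linearI) (auto simp: scaleR_add_left sum.distrib scaleR_sum_right)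

lemma Tb_axis: "Tb b (axis i 1) = b i"
proof -
  have "(\<Sum>j\<in>UNIV. (axis i 1 $ j) *\<^sub>R b j) = (\<Sum>j\<in>UNIV. (if j = i then b j else 0))"
    by (rule sum.cong) (auto simp: axis_def)
  then show ?thesis unfolding Tb_def by simp
qed

lemma inj_Tb:
  assumes ind: "independent (range b)" and ib: "inj b"
  shows "inj (Tb b)"
proof (rule linear_injective_0[OF linear_Tb, THEN iffD2], intro allI impI)
  fix c assume c0: "Tb b c = 0"
  define u where "u v = c $ (inv b v)" for v
  have "(\<Sum>v\<in>range b. u v *\<^sub>R v) = (\<Sum>i\<in>UNIV. u (b i) *\<^sub>R b i)"
    using sum.reindex[of b UNIV "\<lambda>v. u v *\<^sub>R v"] ib by (simp add: inj_on_def inj_def)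
  also have "\<dots> = Tb b c" unfolding Tb_def u_def using ib by simp
  finally have "(\<Sum>v\<in>range b. u v *\<^sub>R v) = 0" using c0 by simp
  with ind have "\<forall>v\<in>range b. u v = 0"
    using dependent_finite[of "range b"] by auto
  then have "c $ i = 0" for i using ib unfolding u_def by auto
  then show "c = 0" by (simp add: vec_eq_iff)
qed

lemma Tb_iso:
  assumes ind: "independent (range b)" and ib: "inj b"
  obtains Ti where "linear Ti" "\<And>c. Ti (Tb b c) = c" "\<And>y. Tb b (Ti y) = y"
  using linear_injective_isomorphism[OF linear_Tb inj_Tb[OF ind ib]] by blast

lemma has_integral_transl:
  fixes f :: "'a::euclidean_space \<Rightarrow> 'b::banach"
  assumes "bounded S" "(f has_integral I) S"
  shows "((\<lambda>x. f (x + c)) has_integral I) {x. x + c \<in> S}"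
proof -
  obtain a where a: "S \<subseteq> cbox (-a) a" using bounded_subset_cbox_symmetric[OF assms(1)] by blast
  define F where "F x = (if x \<in> S then f x else 0)" for x
  have "(F has_integral I) (cbox (-a) a)" unfolding F_def using has_integral_restrict[OF a] assms(2) by blast
  from has_integral_affinity'[OF this, of 1 c]
  have "((\<lambda>x. F (x + c)) has_integral I) (cbox (-a - c) (a - c))" by (simp add: add.commute)
  moreover have "(\<lambda>x. F (x + c)) = (\<lambda>x. if x \<in> {x. x + c \<in> S} then f (x + c) else 0)"
    by (auto simp: F_def)
  ultimately have 1: "((\<lambda>x. if x \<in> {x. x + c \<in> S} then f (x + c) else 0) has_integral I) (cbox (-a - c) (a - c))"
    by simp
  have sub: "{x. x + c \<in> S} \<subseteq> cbox (-a - c) (a - c)"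
  proof
    fix x assume "x \<in> {x. x + c \<in> S}"
    then have "x + c \<in> cbox (-a) a" using a by auto
    then show "x \<in> cbox (-a - c) (a - c)" by (auto simp: mem_box algebra_simps inner_diff_left)
  qed
  show ?thesis using has_integral_restrict[OF sub] 1 by blast
qed

lemma cont_integrable:
  fixes f :: "'a::euclidean_space \<Rightarrow> 'b::euclidean_space"
  assumes "continuous_on UNIV f" "bounded S" "S \<in> sets borel"
  shows "f integrable_on S"
proof -
  obtain a where a: "S \<subseteq> cbox (-a) a" using bounded_subset_cbox_symmetric[OF assms(2)] by blast
  have "f absolutely_integrable_on cbox (-a) a"
    by (rule absolutely_integrable_continuous) (use assms(1) continuous_on_subset in blast)
  moreover have "S \<in> sets lebesgue" using assms(3) by (metis sets_completionI_sets sets_lborel)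
  ultimately have "f absolutely_integrable_on S" using set_integrable_subset a by blast
  then show ?thesis using absolutely_integrable_on_def by blast
qed

lemma vd_quotient:
  fixes g :: "real \<Rightarrow> 'b::real_normed_vector"
  assumes "(g has_vector_derivative g') (at 0)"
  shows "((\<lambda>r. (g r - g 0) /\<^sub>R r) \<longlongrightarrow> g') (at 0)"
proof -
  from assms have "((\<lambda>h. norm (g (0 + h) - g 0 - h *\<^sub>R g') / norm h) \<longlongrightarrow> 0) (at 0)"
    unfolding has_vector_derivative_def has_derivative_at by blast
  then have 1: "((\<lambda>h. norm (g h - g 0 - h *\<^sub>R g') / norm h) \<longlongrightarrow> 0) (at 0)" by simp
  have "\<forall>\<^sub>F r in at 0. norm (g r - g 0 - r *\<^sub>R g') / norm r = norm ((g r - g 0) /\<^sub>R r - g')"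
    unfolding eventually_at_filter
  proof (rule always_eventually, intro allI impI)
    fix r :: real assume "r \<noteq> 0"
    then have "(g r - g 0) /\<^sub>R r - g' = (1 / r) *\<^sub>R (g r - g 0 - r *\<^sub>R g')"
      by (simp add: scaleR_diff_right inverse_eq_divide)
    then show "norm (g r - g 0 - r *\<^sub>R g') / norm r = norm ((g r - g 0) /\<^sub>R r - g')"
      by simp
  qed
  with 1 have "((\<lambda>r. norm ((g r - g 0) /\<^sub>R r - g')) \<longlongrightarrow> 0) (at 0)"
    by (rule Lim_transform_eventually)
  then show ?thesis
    using tendsto_norm_zero_iff LIM_zero_cancel by blast
qed

lemma pd_frechet:
  assumes "f differentiable at y"
  shows "pd f y l = frechet_derivative f (at y) (axis l 1)"
proof -
  have fd: "(f has_derivative frechet_derivative f (at y)) (at (y + 0 *\<^sub>R axis l 1) within UNIV)"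
    using frechet_derivative_works[THEN iffD1, OF assms] by simp
  have "((\<lambda>r. f (y + r *\<^sub>R axis l 1)) has_vector_derivative frechet_derivative f (at y) (axis l 1)) (at 0)"
    by (rule line_vd[OF fd]) simp
  then show ?thesis unfolding pd_def by (rule vector_derivative_at)
qed

context
  fixes b :: "'d::finite \<Rightarrow> real^'d" and Ti :: "real^'d \<Rightarrow> real^'d"
  assumes Ti: "linear Ti" "\<And>c. Ti (Tb b c) = c" "\<And>y. Tb b (Ti y) = y"
begin

definition Rset :: "('d \<Rightarrow> real) \<Rightarrow> ('d \<Rightarrow> real) \<Rightarrow> (real^'d) set" where
  "Rset l u = {y. \<forall>j. l j \<le> Ti y $ j \<and> Ti y $ j < u j}"

lemma fund_dom_Rset: "fund_dom b = Rset (\<lambda>_. -1/2) (\<lambda>_. 1/2)"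
proof (intro set_eqI iffI)
  fix y assume "y \<in> fund_dom b"
  then obtain c where c: "y = (\<Sum>i\<in>UNIV. c i *\<^sub>R b i)" "\<forall>i. -1/2 \<le> c i \<and> c i < 1/2"
    unfolding fund_dom_def by blast
  have "y = Tb b (\<chi> i. c i)" unfolding Tb_def c by simp
  then have "Ti y = (\<chi> i. c i)" using Ti by simp
  then show "y \<in> Rset (\<lambda>_. -1/2) (\<lambda>_. 1/2)" using c(2) unfolding Rset_def by simp
next
  fix y assume "y \<in> Rset (\<lambda>_. -1/2) (\<lambda>_. 1/2)"
  then have "\<forall>i. -1/2 \<le> Ti y $ i \<and> Ti y $ i < 1/2" unfolding Rset_def by simp
  moreover have "y = (\<Sum>i\<in>UNIV. (Ti y $ i) *\<^sub>R b i)" using Ti(3)[of y] unfolding Tb_def by simp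
  ultimately show "y \<in> fund_dom b" unfolding fund_dom_def by blast
qed

lemma Rset_borel: "Rset l u \<in> sets borel"
proof -
  have [measurable]: "Ti \<in> borel_measurable borel"
    using Ti(1) by (intro borel_measurable_continuous_onI linear_continuous_on linear_conv_bounded_linear[THEN iffD1])
  show ?thesis unfolding Rset_def by measurable
qed

lemma Rset_bounded: "bounded (Rset l u)"
proof -
  have "Rset l u \<subseteq> Tb b ` cbox (\<chi> j. l j) (\<chi> j. u j)"
  proof
    fix y assume "y \<in> Rset l u"
    then have "Ti y \<in> cbox (\<chi> j. l j) (\<chi> j. u j)" unfolding Rset_def by (auto simp: mem_box_cart less_imp_le)
    then show "y \<in> Tb b ` cbox (\<chi> j. l j) (\<chi> j. u j)" using Ti(3)[of y] by (metis image_eqI)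
  qed
  moreover have "bounded (Tb b ` cbox (\<chi> j. l j) (\<chi> j. u j))"
    by (rule bounded_linear_image[OF bounded_cbox]) (simp add: linear_Tb linear_conv_bounded_linear[symmetric])
  ultimately show ?thesis using bounded_subset by blast
qed

lemma Ti_b: "Ti (b i) = axis i 1" using Ti(2)[of "axis i 1"] by (simp add: Tb_axis)

lemma Ti_shift: "Ti (x + s *\<^sub>R b i) $ j = Ti x $ j + (if j = i then s else 0)"
  using Ti(1) by (simp add: linear_add linear_scale Ti_b axis_def)

lemma Ti_shift1: "Ti (x + b i) $ j = Ti x $ j + (if j = i then 1 else 0)"
  using Ti_shift[of x 1 i j] by simp

lemma b_lattice: "b i \<in> lattice b"
proof -
  have "(\<Sum>j\<in>UNIV. of_int (if j = i then 1 else 0) *\<^sub>R b j) = (\<Sum>j\<in>UNIV. if j = i then b j else 0)"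
    by (rule sum.cong) auto
  then have "(\<Sum>j\<in>UNIV. of_int (if j = i then 1 else 0) *\<^sub>R b j) = b i" by simp
  then have "\<exists>m. b i = (\<Sum>j\<in>UNIV. of_int (m j) *\<^sub>R b j) \<and> True"
    by (intro exI[of _ "\<lambda>j. if j = i then (1::int) else 0"]) simp
  then show ?thesis unfolding lattice_def by simp
qed

lemma Rset_split: "y \<in> Rset l u \<longleftrightarrow>
   (\<forall>j. j \<noteq> i \<longrightarrow> l j \<le> Ti y $ j \<and> Ti y $ j < u j) \<and> l i \<le> Ti y $ i \<and> Ti y $ i < u i"
  unfolding Rset_def by auto

lemma periodic_shift_integral:
  fixes h :: "real^'d \<Rightarrow> 'b::euclidean_space"
  assumes per: "periodic b h" and ch: "continuous_on UNIV h" and s: "0 \<le> s" "s \<le> 1"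
  shows "integral (Rset (\<lambda>_. -1/2) (\<lambda>_. 1/2)) (\<lambda>y. h (y + s *\<^sub>R b i))
       = integral (Rset (\<lambda>_. -1/2) (\<lambda>_. 1/2)) h"
proof -
  define l0 :: "'d \<Rightarrow> real" where "l0 = (\<lambda>_. -1/2)"
  define u0 :: "'d \<Rightarrow> real" where "u0 = (\<lambda>_. 1/2)"
  define Y where "Y = Rset l0 u0"
  define Ys where "Ys = Rset (l0(i := -1/2 + s)) (u0(i := 1/2 + s))"
  define A where "A = Rset (l0(i := -1/2 + s)) u0"
  define B where "B = Rset (l0(i := 1/2)) (u0(i := 1/2 + s))"
  define B' where "B' = Rset l0 (u0(i := -1/2 + s))"
  have intg: "h integrable_on Rset l u" for l u by (rule cont_integrable[OF ch Rset_bounded Rset_borel])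
  have e1: "{x. x + s *\<^sub>R b i \<in> Ys} = Y"
    unfolding Ys_def Y_def by (intro set_eqI) (simp add: Rset_split[of _ _ _ i] Ti_shift l0_def u0_def)
  have e2: "Ys = A \<union> B" unfolding Ys_def A_def B_def using s
    by (intro set_eqI) (simp add: Rset_split[of _ _ _ i] l0_def u0_def; auto)
  have e3: "A \<inter> B = {}" unfolding A_def B_def
    by (intro set_eqI) (simp add: Rset_split[of _ _ _ i] l0_def u0_def)
  have e4: "Y = A \<union> B'" unfolding Y_def A_def B'_def using s
    by (intro set_eqI) (simp add: Rset_split[of _ _ _ i] l0_def u0_def; auto)
  have e5: "A \<inter> B' = {}" unfolding A_def B'_def
    by (intro set_eqI) (simp add: Rset_split[of _ _ _ i] l0_def u0_def)
  have e6: "{x. x + 1 *\<^sub>R b i \<in> B} = B'"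
    unfolding B_def B'_def by (intro set_eqI) (simp add: Rset_split[of _ _ _ i] Ti_shift1 l0_def u0_def; auto)
  have hA: "(h has_integral integral A h) A" using intg A_def by (simp add: integrable_integral)
  have hB: "(h has_integral integral B h) B" using intg B_def by (simp add: integrable_integral)
  have "(h has_integral (integral A h + integral B h)) Ys"
    unfolding e2 by (rule has_integral_Un[OF hA hB]) (simp add: e3)
  from has_integral_transl[OF _ this, of "s *\<^sub>R b i"]
  have 1: "((\<lambda>y. h (y + s *\<^sub>R b i)) has_integral (integral A h + integral B h)) Y"
    unfolding e1 using Rset_bounded Ys_def by blast
  from has_integral_transl[OF _ hB, of "1 *\<^sub>R b i"]
  have "((\<lambda>y. h (y + 1 *\<^sub>R b i)) has_integral integral B h) B'" unfolding e6 using Rset_bounded B_def by blast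
  moreover have "h (y + 1 *\<^sub>R b i) = h y" for y using per b_lattice unfolding periodic_def by simp
  ultimately have hB': "(h has_integral integral B h) B'" by simp
  have 2: "(h has_integral (integral A h + integral B h)) Y"
    unfolding e4 by (rule has_integral_Un[OF hA hB']) (simp add: e5)
  show ?thesis using 1 2 unfolding Y_def l0_def u0_def by (simp add: integral_unique)
qed


lemma ibp_basis:
  fixes h :: "real^'d \<Rightarrow> 'b::euclidean_space"
  assumes per: "periodic b h" and dh: "\<And>y. h differentiable at y"
    and cD: "\<And>v. continuous_on UNIV (\<lambda>y. frechet_derivative h (at y) v)"
  shows "integral (Rset (\<lambda>_. -1/2) (\<lambda>_. 1/2)) (\<lambda>y. frechet_derivative h (at y) (b i)) = 0"
proof -
  define Y where "Y = Rset (\<lambda>_. -1/2) (\<lambda>_. 1/2)"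
  define D where "D y = frechet_derivative h (at y) (b i)" for y
  have hasD: "(h has_derivative frechet_derivative h (at y)) (at y within UNIV)" for y
    using dh frechet_derivative_works by auto
  have ch: "continuous_on UNIV h"
    using dh by (simp add: continuous_at_imp_continuous_on differentiable_imp_continuous_within)
  have vdl: "((\<lambda>r. h (y + r *\<^sub>R b i)) has_vector_derivative D (y + r *\<^sub>R b i)) (at r within T)" for y r T
    unfolding D_def by (rule line_vd[OF hasD]) simp
  obtain R where R: "R > 0" "\<And>y. y \<in> Y \<Longrightarrow> norm y \<le> R"
    using Rset_bounded unfolding Y_def bounded_pos by blast
  define K where "K = cball (0::real^'d) (R + norm (b i))"
  have "bounded (D ` K)"
    unfolding K_def D_def
    by (rule compact_imp_bounded[OF compact_continuous_image[OF continuous_on_subset[OF cD] compact_cball]]) simp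
  then obtain M where M: "M > 0" "\<And>z. z \<in> K \<Longrightarrow> norm (D z) \<le> M"
    unfolding bounded_pos by blast
  define s where "s k = inverse (real (Suc k))" for k
  have s: "0 < s k" "s k \<le> 1" for k unfolding s_def by (auto simp: field_simps)
  define f where "f k y = (h (y + s k *\<^sub>R b i) - h y) /\<^sub>R s k" for k y
  have cf: "continuous_on UNIV (f k)" for k
    unfolding f_def by (intro continuous_intros continuous_on_compose2[OF ch]) auto
  have fint: "f k integrable_on Y" for k
    unfolding Y_def by (rule cont_integrable[OF cf Rset_bounded Rset_borel])
  have hint: "(\<lambda>y. h (y + c *\<^sub>R b i)) integrable_on Y" for c
    unfolding Y_def by (rule cont_integrable[OF _ Rset_bounded Rset_borel])
      (intro continuous_on_compose2[OF ch] continuous_intros, auto)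
  have int0: "integral Y (f k) = 0" for k
  proof -
    have "integral Y (f k) = (inverse (s k)) *\<^sub>R (integral Y (\<lambda>y. h (y + s k *\<^sub>R b i) - h y))"
      unfolding f_def by (simp add: integral_scaleR_right divide_inverse_commute)
    also have "integral Y (\<lambda>y. h (y + s k *\<^sub>R b i) - h y) = integral Y (\<lambda>y. h (y + s k *\<^sub>R b i)) - integral Y (\<lambda>y. h (y + 0 *\<^sub>R b i))"
      by (subst integral_diff[OF hint hint[of 0], symmetric]) simp
    also have "\<dots> = 0"
      using periodic_shift_integral[OF per ch less_imp_le[OF s(1)] s(2), of k i]
        periodic_shift_integral[OF per ch order_refl zero_le_one, of i] unfolding Y_def by simp
    finally show ?thesis by simp
  qed
  have bound: "norm (f k y) \<le> 3 * M" if y: "y \<in> Y" for k y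
  proof -
    have inK: "y + r *\<^sub>R b i \<in> K" if "r \<in> {0..s k}" for r
    proof -
      have "norm (y + r *\<^sub>R b i) \<le> norm y + \<bar>r\<bar> * norm (b i)" by (metis norm_scaleR norm_triangle_ineq)
      also have "\<dots> \<le> R + 1 * norm (b i)"
        using R(2)[OF y] that s[of k] by (intro add_mono mult_right_mono) auto
      finally show ?thesis unfolding K_def by simp
    qed
    have B: "norm (D (y + r *\<^sub>R b i) - D (y + 0 *\<^sub>R b i)) \<le> 2 * M" if "r \<in> {0..s k}" for r
    proof -
      have "norm (D (y + r *\<^sub>R b i) - D (y + 0 *\<^sub>R b i)) \<le> norm (D (y + r *\<^sub>R b i)) + norm (D (y + 0 *\<^sub>R b i))"
        by (rule norm_triangle_ineq4)
      also have "\<dots> \<le> M + M" using M(2)[OF inK[OF that]] M(2)[OF inK[of 0]] s[of k] by (intro add_mono) auto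
      finally show ?thesis by simp
    qed
    have "norm (h (y + s k *\<^sub>R b i) - h (y + 0 *\<^sub>R b i) - (s k - 0) *\<^sub>R D (y + 0 *\<^sub>R b i)) \<le> norm (s k - 0) * (2 * M)"
      by (rule vector_differentiable_bound_linearization[OF vdl _ B]) (use s[of k] in \<open>auto simp: closed_segment_eq_real_ivl\<close>)
    then have 1: "norm (h (y + s k *\<^sub>R b i) - h y - s k *\<^sub>R D y) \<le> s k * (2 * M)" using s[of k] by simp
    have 2: "norm (s k *\<^sub>R D y) \<le> s k * M" using M(2)[OF inK[of 0]] s[of k] by (simp add: mult_left_mono)
    have "norm (h (y + s k *\<^sub>R b i) - h y) \<le> norm (h (y + s k *\<^sub>R b i) - h y - s k *\<^sub>R D y) + norm (s k *\<^sub>R D y)"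
      by (rule order_trans[OF _ norm_triangle_ineq]) simp
    also have "\<dots> \<le> s k * (3 * M)" using 1 2 by (simp add: algebra_simps)
    finally have "norm (h (y + s k *\<^sub>R b i) - h y) \<le> s k * (3 * M)" .
    then have "inverse (s k) * norm (h (y + s k *\<^sub>R b i) - h y) \<le> inverse (s k) * (s k * (3 * M))"
      using s[of k] by (intro mult_left_mono) auto
    also have "\<dots> = 3 * M" using s[of k] by simp
    finally show ?thesis unfolding f_def using s[of k] by simp
  qed
  have conv: "(\<lambda>k. f k y) \<longlonglongrightarrow> D y" for y
  proof -
    have q: "((\<lambda>r. (h (y + r *\<^sub>R b i) - h (y + 0 *\<^sub>R b i)) /\<^sub>R r) \<longlongrightarrow> D (y + 0 *\<^sub>R b i)) (at 0)"
      by (rule vd_quotient[of "\<lambda>r. h (y + r *\<^sub>R b i)"]) (rule vdl)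
    have fl: "filterlim s (at 0) sequentially"
      unfolding filterlim_at using s LIMSEQ_inverse_real_of_nat unfolding s_def
      by (auto intro!: always_eventually)
    show ?thesis using filterlim_compose[OF q fl] unfolding f_def by simp
  qed
  have "(\<lambda>k. integral Y (f k)) \<longlonglongrightarrow> integral Y D"
    by (rule dominated_convergence(2)[OF fint _ bound conv])
      (unfold Y_def, rule cont_integrable[OF continuous_on_const Rset_bounded Rset_borel])
  then have "(\<lambda>k. 0) \<longlonglongrightarrow> integral Y D" using int0 by simp
  then show ?thesis unfolding Y_def[symmetric] D_def[symmetric] using LIMSEQ_unique tendsto_const by blast
qed

lemma ibp:
  fixes h :: "real^'d \<Rightarrow> 'b::euclidean_space"
  assumes per: "periodic b h" and dh: "\<And>y. h differentiable at y"
    and cD: "\<And>v. continuous_on UNIV (\<lambda>y. frechet_derivative h (at y) v)"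
  shows "integral (Rset (\<lambda>_. -1/2) (\<lambda>_. 1/2)) (\<lambda>y. frechet_derivative h (at y) v) = 0"
proof -
  define Y where "Y = Rset (\<lambda>_. -1/2) (\<lambda>_. 1/2)"
  have lin: "linear (frechet_derivative h (at y))" for y
    using dh frechet_derivative_works has_derivative_linear by blast
  have vv: "v = (\<Sum>i\<in>UNIV. (Ti v $ i) *\<^sub>R b i)" using Ti(3)[of v] unfolding Tb_def by simp
  have eq: "frechet_derivative h (at y) v = (\<Sum>i\<in>UNIV. (Ti v $ i) *\<^sub>R frechet_derivative h (at y) (b i))" for y
  proof -
    have "frechet_derivative h (at y) v = frechet_derivative h (at y) (\<Sum>i\<in>UNIV. (Ti v $ i) *\<^sub>R b i)"
      using vv by simp
    also have "\<dots> = (\<Sum>i\<in>UNIV. frechet_derivative h (at y) ((Ti v $ i) *\<^sub>R b i))"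
      by (rule linear_sum[OF lin])
    also have "\<dots> = (\<Sum>i\<in>UNIV. (Ti v $ i) *\<^sub>R frechet_derivative h (at y) (b i))"
      by (rule sum.cong[OF refl]) (rule linear_scale[OF lin])
    finally show ?thesis .
  qed
  have "integral Y (\<lambda>y. frechet_derivative h (at y) v) = (\<Sum>i\<in>UNIV. integral Y (\<lambda>y. (Ti v $ i) *\<^sub>R frechet_derivative h (at y) (b i)))"
    unfolding eq
    by (rule integral_sum) (auto simp: Y_def intro!: cont_integrable[OF _ Rset_bounded Rset_borel] continuous_intros cD)
  also have "\<dots> = 0"
    using ibp_basis[OF per dh cD] unfolding Y_def by (simp add: integral_scaleR_right)
  finally show ?thesis unfolding Y_def .
qed

end

lemma smooth_cont_on: "smooth_on UNIV f \<Longrightarrow> continuous_on UNIV f"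
  using smooth_continuous continuous_at_imp_continuous_on by blast

lemma smooth_diff_at: "smooth_on UNIV f \<Longrightarrow> f differentiable at x"
  using smooth_differentiable by blast

lemma smooth_has_at: "smooth_on UNIV f \<Longrightarrow> (f has_derivative frechet_derivative f (at x)) (at x)"
  using smooth_has_derivative by fastforce

lemma smooth_D_at: "smooth_on UNIV f \<Longrightarrow> smooth_on UNIV (\<lambda>x. frechet_derivative f (at x) v)"
  using smooth_D[of UNIV f v] by simp

lemma smooth_D_cont: "smooth_on UNIV f \<Longrightarrow> continuous_on UNIV (\<lambda>x. frechet_derivative f (at x) v)"
  using smooth_cont_on smooth_D_at by blast

lemma periodic_D:
  assumes per: "periodic b f" and d: "\<And>x. f differentiable at x"
  shows "periodic b (\<lambda>x. frechet_derivative f (at x) v)"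
  unfolding periodic_def
proof (intro allI impI)
  fix y \<gamma> assume g: "\<gamma> \<in> lattice b"
  have "((\<lambda>x. f (x + \<gamma>)) has_derivative frechet_derivative f (at (y + \<gamma>))) (at y)"
  proof -
    have "(f has_derivative frechet_derivative f (at (y + \<gamma>))) (at (y + \<gamma>))"
      using d frechet_derivative_works by blast
    from has_derivative_compose[OF has_derivative_add[OF has_derivative_ident has_derivative_const[of \<gamma>]] this[unfolded]]
    show ?thesis by (simp add: o_def)
  qed
  moreover have "(\<lambda>x. f (x + \<gamma>)) = f" using per g unfolding periodic_def by auto
  ultimately have "frechet_derivative f (at (y + \<gamma>)) = frechet_derivative f (at y)"
    using frechet_derivative_at by metis
  then show "frechet_derivative f (at (y + \<gamma>)) v = frechet_derivative f (at y) v" by simp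
qed

context
  fixes b :: "'d::finite \<Rightarrow> real^'d" and Ti :: "real^'d \<Rightarrow> real^'d"
  assumes Ti: "linear Ti" "\<And>c. Ti (Tb b c) = c" "\<And>y. Tb b (Ti y) = y"
begin

lemma cont_int_Y: "continuous_on UNIV (f :: real^'d \<Rightarrow> complex) \<Longrightarrow> f integrable_on fund_dom b"
  using cont_integrable[OF _ Rset_bounded[OF Ti] Rset_borel[OF Ti]] fund_dom_Rset[OF Ti] by metis

lemma SA1:
  fixes f g :: "real^'d \<Rightarrow> complex"
  assumes sf: "smooth_on UNIV f" and sg: "smooth_on UNIV g" and pf: "periodic b f" and pg: "periodic b g"
  shows "integral (fund_dom b) (\<lambda>y. cnj (f y) * frechet_derivative g (at y) v)
       = - integral (fund_dom b) (\<lambda>y. cnj (frechet_derivative f (at y) v) * g y)"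
proof -
  define h where "h y = cnj (f y) * g y" for y
  have hd: "(h has_derivative (\<lambda>w. cnj (f y) * frechet_derivative g (at y) w + cnj (frechet_derivative f (at y) w) * g y)) (at y)" for y
    unfolding h_def by (rule has_derivative_mult[OF has_derivative_cnj[OF smooth_has_at[OF sf]] smooth_has_at[OF sg]])
  then have hD: "frechet_derivative h (at y) w = cnj (f y) * frechet_derivative g (at y) w + cnj (frechet_derivative f (at y) w) * g y" for y w
    using frechet_derivative_at[OF hd[of y], symmetric] by simp
  have ph: "periodic b h" using pf pg unfolding periodic_def h_def by simp
  have dh: "h differentiable at y" for y using hd differentiable_def by blast
  have c1: "continuous_on UNIV (\<lambda>y. cnj (f y) * frechet_derivative g (at y) w)" for w
    by (intro continuous_intros smooth_cont_on[OF sf] smooth_D_cont[OF sg])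
  have c2: "continuous_on UNIV (\<lambda>y. cnj (frechet_derivative f (at y) w) * g y)" for w
    by (intro continuous_intros smooth_cont_on[OF sg] smooth_D_cont[OF sf])
  have cD: "continuous_on UNIV (\<lambda>y. frechet_derivative h (at y) w)" for w
    unfolding hD by (intro continuous_on_add c1 c2)
  have "integral (fund_dom b) (\<lambda>y. frechet_derivative h (at y) v) = 0"
    using ibp[OF Ti ph dh cD] fund_dom_Rset[OF Ti] by simp
  then have "integral (fund_dom b) (\<lambda>y. cnj (f y) * frechet_derivative g (at y) v)
     + integral (fund_dom b) (\<lambda>y. cnj (frechet_derivative f (at y) v) * g y) = 0"
    unfolding hD by (subst integral_add[symmetric]) (auto intro: cont_int_Y c1 c2)
  then show ?thesis by (simp add: eq_neg_iff_add_eq_0)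
qed

lemma SA2:
  fixes f g :: "real^'d \<Rightarrow> complex"
  assumes sf: "smooth_on UNIV f" and sg: "smooth_on UNIV g" and pf: "periodic b f" and pg: "periodic b g"
  shows "integral (fund_dom b) (\<lambda>y. cnj (f y) * frechet_derivative (\<lambda>z. frechet_derivative g (at z) v) (at y) w)
       = integral (fund_dom b) (\<lambda>y. cnj (frechet_derivative (\<lambda>z. frechet_derivative f (at z) w) (at y) v) * g y)"
proof -
  have pg': "periodic b (\<lambda>z. frechet_derivative g (at z) v)" using periodic_D[OF pg smooth_diff_at[OF sg]] .
  have pf': "periodic b (\<lambda>z. frechet_derivative f (at z) w)" using periodic_D[OF pf smooth_diff_at[OF sf]] .
  have "integral (fund_dom b) (\<lambda>y. cnj (f y) * frechet_derivative (\<lambda>z. frechet_derivative g (at z) v) (at y) w)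
      = - integral (fund_dom b) (\<lambda>y. cnj (frechet_derivative f (at y) w) * frechet_derivative g (at y) v)"
    by (rule SA1[OF sf smooth_D_at[OF sg] pf pg'])
  also have "integral (fund_dom b) (\<lambda>y. cnj (frechet_derivative f (at y) w) * frechet_derivative g (at y) v)
      = - integral (fund_dom b) (\<lambda>y. cnj (frechet_derivative (\<lambda>z. frechet_derivative f (at z) w) (at y) v) * g y)"
    by (rule SA1[OF smooth_D_at[OF sf] sg pf' pg])
  finally show ?thesis by simp
qed

end

lemma dderiv_app: "dderiv S vs (dderiv S ws f) = dderiv S (vs @ ws) f"
  by (induction vs) auto

lemma smooth_dd: "smooth_on S f \<Longrightarrow> smooth_on S (dderiv S vs f)"
proof (induction vs)
  case Nil then show ?case by simp
next
  case (Cons v vs)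
  then have "smooth_on S (dderiv S [v] (dderiv S vs f))" using smooth_D[of S "dderiv S vs f" v] by simp
  then show ?case using dderiv_app[of S "[v]" vs f] by simp
qed

lemma dd_swap:
  fixes f :: "'a::euclidean_space \<Rightarrow> 'b::real_normed_vector"
  assumes "smooth_on UNIV f"
  shows "dderiv UNIV (vs @ v # u # ws) f = dderiv UNIV (vs @ u # v # ws) f"
proof -
  define g where "g = dderiv UNIV ws f"
  have sg: "smooth_on UNIV g" unfolding g_def by (rule smooth_dd[OF assms])
  have "dderiv UNIV [v,u] g x = dderiv UNIV [u,v] g x" for x
    by (rule schwarz[OF sg, of x 1]) auto
  then have e: "dderiv UNIV [v,u] g = dderiv UNIV [u,v] g" by auto
  have "dderiv UNIV (vs @ v # u # ws) f = dderiv UNIV vs (dderiv UNIV [v,u] g)"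
    unfolding g_def dderiv_app by simp
  also have "\<dots> = dderiv UNIV vs (dderiv UNIV [u,v] g)" by (simp only: e)
  also have "\<dots> = dderiv UNIV (vs @ u # v # ws) f" unfolding g_def dderiv_app by simp
  finally show ?thesis .
qed

lemma dd1: "dderiv UNIV [v] f x = frechet_derivative f (at x) v" by simp

lemma dd_Cons: "dderiv UNIV (v # vs) f x = frechet_derivative (dderiv UNIV vs f) (at x) v" by simp

lemma sl_y:
  assumes "f differentiable at (y, k)"
  shows "((\<lambda>y. f (y, k)) has_derivative (\<lambda>w. frechet_derivative f (at (y,k)) (w, 0))) (at y)"
proof -
  have 1: "((\<lambda>y. (y, k)) has_derivative (\<lambda>w. (w, 0))) (at y)" by (auto intro!: derivative_eq_intros)
  have 2: "(f has_derivative frechet_derivative f (at (y,k))) (at (y,k))" using assms frechet_derivative_works by blast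
  show ?thesis using has_derivative_compose[OF 1 2] by (simp add: o_def)
qed

lemma sl_k:
  assumes "f differentiable at (y, k)"
  shows "((\<lambda>k. f (y, k)) has_derivative (\<lambda>w. frechet_derivative f (at (y,k)) (0, w))) (at k)"
proof -
  have 1: "((\<lambda>k. (y, k)) has_derivative (\<lambda>w. (0, w))) (at k)" by (auto intro!: derivative_eq_intros)
  have 2: "(f has_derivative frechet_derivative f (at (y,k))) (at (y,k))" using assms frechet_derivative_works by blast
  show ?thesis using has_derivative_compose[OF 1 2] by (simp add: o_def)
qed

lemma sl_y_fd: "f differentiable at (y, k) \<Longrightarrow> frechet_derivative (\<lambda>y. f (y, k)) (at y) w = dderiv UNIV [(w,0)] f (y,k)"
  using frechet_derivative_at[OF sl_y] by (metis dd1)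

lemma sl_k_fd: "f differentiable at (y, k) \<Longrightarrow> frechet_derivative (\<lambda>k. f (y, k)) (at k) w = dderiv UNIV [(0,w)] f (y,k)"
  using frechet_derivative_at[OF sl_k] by (metis dd1)

lemma sl_y_dd:
  fixes f :: "('a::euclidean_space \<times> 'c::euclidean_space) \<Rightarrow> 'b::real_normed_vector"
  assumes "smooth_on UNIV f"
  shows "dderiv UNIV vs (\<lambda>y. f (y, k)) = (\<lambda>y. dderiv UNIV (map (\<lambda>w. (w, 0)) vs) f (y, k))"
proof (induction vs)
  case Nil then show ?case by simp
next
  case (Cons v vs)
  have d: "dderiv UNIV (map (\<lambda>w. (w, 0)) vs) f differentiable at (y, k)" for y
    using smooth_differentiable[OF smooth_dd[OF assms]] by blast
  show ?case
  proof (rule ext)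
    fix y
    have "dderiv UNIV (v # vs) (\<lambda>y. f (y,k)) y = frechet_derivative (dderiv UNIV vs (\<lambda>y. f (y,k))) (at y) v"
      by simp
    also have "\<dots> = frechet_derivative (\<lambda>y. dderiv UNIV (map (\<lambda>w. (w, 0)) vs) f (y,k)) (at y) v"
      by (simp only: Cons.IH)
    also have "\<dots> = dderiv UNIV [(v,0)] (dderiv UNIV (map (\<lambda>w. (w, 0)) vs) f) (y,k)"
      by (rule sl_y_fd[OF d])
    also have "\<dots> = dderiv UNIV (map (\<lambda>w. (w, 0)) (v # vs)) f (y,k)" by simp
    finally show "dderiv UNIV (v # vs) (\<lambda>y. f (y,k)) y = dderiv UNIV (map (\<lambda>w. (w, 0)) (v # vs)) f (y,k)" .
  qed
qed

lemma smooth_sl_y: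
  assumes "smooth_on UNIV f"
  shows "smooth_on UNIV (\<lambda>y. f (y, k))"
  unfolding smooth_on_def
proof (intro allI ballI)
  fix vs and y :: 'a
  have "(\<lambda>y. dderiv UNIV (map (\<lambda>w. (w, 0)) vs) f (y, k)) differentiable at y"
    using sl_y[OF smooth_differentiable[OF smooth_dd[OF assms]]] differentiable_def by blast
  then show "dderiv UNIV vs (\<lambda>y. f (y, k)) differentiable at y within UNIV"
    using sl_y_dd[OF assms] by simp
qed

lemma pd_sl_y: "smooth_on UNIV f \<Longrightarrow> pd (\<lambda>y. f (y, k)) y l = dderiv UNIV [(axis l 1, 0)] f (y, k)"
  using pd_frechet[OF smooth_differentiable[OF smooth_sl_y]] sl_y_fd[OF smooth_differentiable] by fastforce

lemma pd_sl_k: "smooth_on UNIV f \<Longrightarrow> pd (\<lambda>k. f (y, k)) k l = dderiv UNIV [(0, axis l 1)] f (y, k)"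
proof -
  assume s: "smooth_on UNIV f"
  have "(\<lambda>k. f (y, k)) differentiable at k"
    using sl_k[OF smooth_differentiable[OF s]] differentiable_def by blast
  then show ?thesis using pd_frechet sl_k_fd[OF smooth_differentiable[OF s]] by fastforce
qed

definition yper :: "('d::finite \<Rightarrow> real^'d) \<Rightarrow> ((real^'d) \<times> 'c \<Rightarrow> 'b) \<Rightarrow> bool" where
  "yper b G \<longleftrightarrow> (\<forall>y k \<gamma>. \<gamma> \<in> lattice b \<longrightarrow> G (y + \<gamma>, k) = G (y, k))"

lemma shift_D:
  assumes sh: "\<And>p. G (p + c) = G p" and d: "\<And>p. G differentiable at p"
  shows "frechet_derivative G (at (p + c)) = frechet_derivative G (at p)"
proof -
  have "(G has_derivative frechet_derivative G (at (p + c))) (at (p + c))"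
    using d frechet_derivative_works by blast
  from has_derivative_compose[OF has_derivative_add[OF has_derivative_ident has_derivative_const[of c]] this]
  have "((\<lambda>x. G (x + c)) has_derivative frechet_derivative G (at (p + c))) (at p)" by (simp add: o_def)
  moreover have "(\<lambda>x. G (x + c)) = G" using sh by auto
  ultimately show ?thesis using frechet_derivative_at by metis
qed

lemma yper_dd:
  fixes G :: "(real^'d) \<times> 'c::euclidean_space \<Rightarrow> 'b::real_normed_vector"
  assumes s: "smooth_on UNIV G" and p: "yper b G"
  shows "yper b (dderiv UNIV vs G)"
proof (induction vs)
  case Nil then show ?case using p by simp
next
  case (Cons v vs)
  show ?case unfolding yper_def
  proof (intro allI impI)
    fix y k \<gamma> assume g: "(\<gamma>::real^'d) \<in> lattice b"
    have sh: "dderiv UNIV vs G (q + (\<gamma>, 0)) = dderiv UNIV vs G q" for q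
      using Cons g unfolding yper_def by (cases q) simp
    have "frechet_derivative (dderiv UNIV vs G) (at ((y, k) + (\<gamma>, 0))) = frechet_derivative (dderiv UNIV vs G) (at (y, k))"
      by (rule shift_D[of "dderiv UNIV vs G" "(\<gamma>, 0)", OF sh]) (use smooth_differentiable[OF smooth_dd[OF s]] in blast)
    then show "dderiv UNIV (v # vs) G (y + \<gamma>, k) = dderiv UNIV (v # vs) G (y, k)" by simp
  qed
qed

lemma yper_sl: "yper b G \<Longrightarrow> periodic b (\<lambda>y. G (y, k))"
  unfolding yper_def periodic_def by simp

definition ey :: "'d::finite \<Rightarrow> (real^'d) \<times> (real^'d)" where "ey l = (axis l 1, 0)"
definition ek :: "'d::finite \<Rightarrow> (real^'d) \<times> (real^'d)" where "ek l = (0, axis l 1)"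

lemma ey_simps[simp]: "fst (ey l) = axis l 1" "snd (ey l) = 0" by (auto simp: ey_def)
lemma ek_simps[simp]: "fst (ek l) = 0" "snd (ek l) = axis l 1" by (auto simp: ek_def)

abbreviation dd where "dd \<equiv> dderiv UNIV"

definition HopP :: "(real^'d::finite \<Rightarrow> real) \<Rightarrow> ((real^'d) \<times> (real^'d) \<Rightarrow> complex) \<Rightarrow> (real^'d) \<times> (real^'d) \<Rightarrow> complex" where
  "HopP V G p = (1/2) * (\<Sum>l\<in>UNIV. - dd [ey l, ey l] G p - 2 * \<i> * of_real (snd p $ l) * dd [ey l] G p
       + of_real (snd p $ l) * of_real (snd p $ l) * G p) + of_real (V (fst p)) * G p"

lemma cont_sl: "smooth_on UNIV H \<Longrightarrow> continuous_on UNIV (\<lambda>y. H (y, k))"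
  using smooth_cont_on[OF smooth_sl_y] .

lemma pd_sl_y': "smooth_on UNIV f \<Longrightarrow> pd (\<lambda>y. f (y, k)) y l = dd [ey l] f (y, k)"
  using pd_sl_y by (simp add: ey_def)

lemma pd_sl_k': "smooth_on UNIV f \<Longrightarrow> pd (\<lambda>k. f (y, k)) k l = dd [ek l] f (y, k)"
  using pd_sl_k by (simp add: ek_def)

lemma pd_lin:
  fixes f g :: "real^'d::finite \<Rightarrow> complex"
  assumes "f differentiable at y" "g differentiable at y"
  shows "pd (\<lambda>z. a * f z + c * g z) y l = a * pd f y l + c * pd g y l"
proof -
  have fd: "(f has_derivative frechet_derivative f (at y)) (at y)" using assms(1) frechet_derivative_works by blast
  have gd: "(g has_derivative frechet_derivative g (at y)) (at y)" using assms(2) frechet_derivative_works by blast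
  have hd: "((\<lambda>z. a * f z + c * g z) has_derivative (\<lambda>h. a * frechet_derivative f (at y) h + c * frechet_derivative g (at y) h)) (at y)"
    by (rule has_derivative_add[OF has_derivative_mult_right[OF fd] has_derivative_mult_right[OF gd]])
  then have cd: "(\<lambda>z. a * f z + c * g z) differentiable at y" using differentiable_def by blast
  have fe: "frechet_derivative (\<lambda>z. a * f z + c * g z) (at y) = (\<lambda>h. a * frechet_derivative f (at y) h + c * frechet_derivative g (at y) h)"
    using frechet_derivative_at[OF hd] by simp
  show ?thesis by (simp only: pd_frechet[OF cd] pd_frechet[OF assms(1)] pd_frechet[OF assms(2)] fe)
qed

lemma Hk_slice:
  assumes s: "smooth_on UNIV G"
  shows "Hk V k (\<lambda>y. G (y, k)) y = HopP V G (y, k)"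
proof -
  have s1: "smooth_on UNIV (dd [ey l] G)" for l using smooth_dd[OF s] .
  have e1: "Dk k l (\<lambda>y. G (y, k)) = (\<lambda>z. (- \<i>) * dd [ey l] G (z, k) + of_real (k $ l) * G (z, k))" for l
    unfolding Dk_def by (simp add: pd_sl_y'[OF s])
  have "Dk k l (Dk k l (\<lambda>y. G (y, k))) y = - dd [ey l, ey l] G (y, k) - 2 * \<i> * of_real (k $ l) * dd [ey l] G (y, k)
       + of_real (k $ l) * of_real (k $ l) * G (y, k)" for l
  proof -
    have pdf: "pd (\<lambda>z. (- \<i>) * dd [ey l] G (z, k) + of_real (k $ l) * G (z, k)) y l
        = (- \<i>) * pd (\<lambda>z. dd [ey l] G (z, k)) y l + of_real (k $ l) * pd (\<lambda>z. G (z, k)) y l"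
      by (rule pd_lin) (use smooth_differentiable[OF smooth_sl_y[OF s1]] smooth_differentiable[OF smooth_sl_y[OF s]] in auto)
    also have "\<dots> = (- \<i>) * dd [ey l, ey l] G (y, k) + of_real (k $ l) * dd [ey l] G (y, k)"
      using pd_sl_y'[OF s1] pd_sl_y'[OF s] dderiv_app[of UNIV "[ey l]" "[ey l]" G] by simp
    finally have pdf2: "pd (\<lambda>z. (- \<i>) * dd [ey l] G (z, k) + of_real (k $ l) * G (z, k)) y l = (- \<i>) * dd [ey l, ey l] G (y, k) + of_real (k $ l) * dd [ey l] G (y, k)" .
    have "Dk k l (Dk k l (\<lambda>y. G (y, k))) y = - \<i> * pd (Dk k l (\<lambda>y. G (y, k))) y l + of_real (k $ l) * Dk k l (\<lambda>y. G (y, k)) y"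
      by (simp add: Dk_def)
    also have "\<dots> = - \<i> * pd (\<lambda>z. (- \<i>) * dd [ey l] G (z, k) + of_real (k $ l) * G (z, k)) y l
        + of_real (k $ l) * ((- \<i>) * dd [ey l] G (y, k) + of_real (k $ l) * G (y, k))"
      by (simp only: e1)
    also have "\<dots> = - \<i> * ((- \<i>) * dd [ey l, ey l] G (y, k) + of_real (k $ l) * dd [ey l] G (y, k))
        + of_real (k $ l) * ((- \<i>) * dd [ey l] G (y, k) + of_real (k $ l) * G (y, k))"
      by (simp only: pdf2)
    finally show ?thesis by (simp add: algebra_simps)
  qed
  then show ?thesis unfolding Hk_def HopP_def by simp
qed

declare dderiv.simps[simp del]

lemma integral_cmult_c:
  "f integrable_on S \<Longrightarrow> integral S (\<lambda>x. (c::complex) * f x) = c * integral S f"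
  using integral_linear[OF _ bounded_linear_mult_right, of f S c] by (simp add: o_def)

lemma integrable_cmult_c:
  "f integrable_on S \<Longrightarrow> (\<lambda>x. (c::complex) * f x) integrable_on S"
  using integrable_linear[OF _ bounded_linear_mult_right, of f S c] by (simp add: o_def)

lemma cont_dd_sl: "smooth_on UNIV G \<Longrightarrow> continuous_on UNIV (\<lambda>y. dd vs G (y, k))"
  using cont_sl[OF smooth_dd] by blast

context
  fixes b :: "'d::finite \<Rightarrow> real^'d" and Ti :: "real^'d \<Rightarrow> real^'d"
  assumes Ti: "linear Ti" "\<And>c. Ti (Tb b c) = c" "\<And>y. Tb b (Ti y) = y"
begin

lemma S1dd:
  fixes F G :: "(real^'d) \<times> (real^'d) \<Rightarrow> complex"
  assumes sF: "smooth_on UNIV F" and sG: "smooth_on UNIV G" and pF: "yper b F" and pG: "yper b G"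
  shows "integral (fund_dom b) (\<lambda>y. cnj (F (y,k)) * dd [ey l] G (y,k))
       = - integral (fund_dom b) (\<lambda>y. cnj (dd [ey l] F (y,k)) * G (y,k))"
  using SA1[OF Ti smooth_sl_y[OF sF, of k] smooth_sl_y[OF sG, of k] yper_sl[OF pF, of k] yper_sl[OF pG, of k], where v = "axis l 1"]
  by (simp only: sl_y_fd[OF smooth_diff_at[OF sF]] sl_y_fd[OF smooth_diff_at[OF sG]] ey_def[symmetric])

lemma S2dd:
  fixes F G :: "(real^'d) \<times> (real^'d) \<Rightarrow> complex"
  assumes sF: "smooth_on UNIV F" and sG: "smooth_on UNIV G" and pF: "yper b F" and pG: "yper b G"
  shows "integral (fund_dom b) (\<lambda>y. cnj (F (y,k)) * dd [ey l, ey l] G (y,k))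
       = integral (fund_dom b) (\<lambda>y. cnj (dd [ey l, ey l] F (y,k)) * G (y,k))"
proof -
  have e: "dd [ey l, ey l] H = dd [ey l] (dd [ey l] H)" for H :: "(real^'d) \<times> (real^'d) \<Rightarrow> complex"
    using dderiv_app[of UNIV "[ey l]" "[ey l]" H] by simp
  show ?thesis
    using SA2[OF Ti smooth_sl_y[OF sF, of k] smooth_sl_y[OF sG, of k] yper_sl[OF pF, of k] yper_sl[OF pG, of k], where v = "axis l 1" and w = "axis l 1"]
    unfolding e
    by (simp only: sl_y_fd[OF smooth_diff_at[OF smooth_dd[OF sF]]] sl_y_fd[OF smooth_diff_at[OF smooth_dd[OF sG]]]
        sl_y_fd[OF smooth_diff_at[OF sF]] sl_y_fd[OF smooth_diff_at[OF sG]] ey_def[symmetric])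
qed

lemma HopP_sym:
  fixes F G :: "(real^'d) \<times> (real^'d) \<Rightarrow> complex"
  assumes sF: "smooth_on UNIV F" and sG: "smooth_on UNIV G" and pF: "yper b F" and pG: "yper b G"
    and cV: "continuous_on UNIV V"
  shows "integral (fund_dom b) (\<lambda>y. cnj (F (y,k)) * HopP V G (y,k))
       = integral (fund_dom b) (\<lambda>y. cnj (HopP V F (y,k)) * G (y,k))"
proof -
  define h where "h (H :: (real^'d) \<times> (real^'d) \<Rightarrow> complex) (l::'d) (p :: (real^'d) \<times> (real^'d)) = - dd [ey l, ey l] H p - 2 * \<i> * of_real (snd p $ l) * dd [ey l] H p
       + of_real (snd p $ l) * of_real (snd p $ l) * H p" for H l p
  define c where "c l y = (cnj (dd [ey l, ey l] F (y,k)) * G (y,k) - cnj (F (y,k)) * dd [ey l, ey l] G (y,k))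
       - 2 * \<i> * of_real (k $ l) * (cnj (F (y,k)) * dd [ey l] G (y,k) + cnj (dd [ey l] F (y,k)) * G (y,k))" for l y
  have pl: "cnj (F (y,k)) * h G l (y,k) - cnj (h F l (y,k)) * G (y,k) = c l y" for l y
    unfolding h_def c_def by (simp add: algebra_simps)
  have pw: "cnj (F (y,k)) * HopP V G (y,k) - cnj (HopP V F (y,k)) * G (y,k) = (1/2) * (\<Sum>l\<in>UNIV. c l y)" for y
  proof -
    have "HopP V H p = (1/2) * (\<Sum>l\<in>UNIV. h H l p) + of_real (V (fst p)) * H p" for H p
      unfolding HopP_def h_def by simp
    then have "cnj (F (y,k)) * HopP V G (y,k) - cnj (HopP V F (y,k)) * G (y,k)
      = (1/2) * (\<Sum>l\<in>UNIV. cnj (F (y,k)) * h G l (y,k) - cnj (h F l (y,k)) * G (y,k))"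
      by (simp add: algebra_simps sum_distrib_left sum_subtractf)
    then show ?thesis using pl by simp
  qed
  have ci: "continuous_on UNIV (\<lambda>y. c l y)" for l
    unfolding c_def by (intro continuous_intros cont_dd_sl[OF sF] cont_dd_sl[OF sG]
        cont_sl[OF sF] cont_sl[OF sG])
  have int: "f integrable_on fund_dom b" if "continuous_on UNIV f" for f :: "real^'d \<Rightarrow> complex"
    using cont_int_Y[OF Ti that] .
  have c0: "integral (fund_dom b) (c l) = 0" for l
  proof -
    have i1: "integral (fund_dom b) (\<lambda>y. cnj (dd [ey l, ey l] F (y,k)) * G (y,k) - cnj (F (y,k)) * dd [ey l, ey l] G (y,k)) = 0"
      by (subst integral_diff) (auto intro!: int continuous_intros cont_dd_sl[OF sF] cont_dd_sl[OF sG]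
          cont_sl[OF sF] cont_sl[OF sG] simp: S2dd[OF sF sG pF pG])
    have i2: "integral (fund_dom b) (\<lambda>y. cnj (F (y,k)) * dd [ey l] G (y,k) + cnj (dd [ey l] F (y,k)) * G (y,k)) = 0"
      by (subst integral_add) (auto intro!: int continuous_intros cont_dd_sl[OF sF] cont_dd_sl[OF sG]
          cont_sl[OF sF] cont_sl[OF sG] simp: S1dd[OF sF sG pF pG])
    show ?thesis unfolding c_def
      apply (subst integral_diff)
        apply (auto intro!: int continuous_intros cont_dd_sl[OF sF] cont_dd_sl[OF sG] cont_sl[OF sF] cont_sl[OF sG])[2]
      apply (subst integral_cmult_c)
       apply (auto intro!: int continuous_intros cont_dd_sl[OF sF] cont_dd_sl[OF sG] cont_sl[OF sF] cont_sl[OF sG])[1]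
      using i1 i2 by simp
  qed
  have "integral (fund_dom b) (\<lambda>y. cnj (F (y,k)) * HopP V G (y,k) - cnj (HopP V F (y,k)) * G (y,k)) = 0"
    unfolding pw
    by (subst integral_cmult_c, rule integrable_sum, simp, rule int[OF ci])
       (subst integral_sum, auto intro: int[OF ci] simp: c0)
  moreover have cH: "continuous_on UNIV (\<lambda>y. HopP V H (y,k))" if "smooth_on UNIV H" for H
  proof -
    have cVy: "continuous_on UNIV (\<lambda>y. complex_of_real (V y))" by (intro continuous_intros cV)
    show ?thesis unfolding HopP_def fst_conv snd_conv
      by (intro continuous_intros cont_dd_sl[OF that] cont_sl[OF that] cVy)
  qed
  ultimately show ?thesis
    by (subst (asm) integral_diff) (auto intro!: int continuous_intros cont_sl[OF sF] cont_sl[OF sG] cH[OF sF] cH[OF sG])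
qed

end

lemma dd_swap1: "smooth_on UNIV f \<Longrightarrow> dd [v, u] f = dd [u, v] f"
  using dd_swap[of f "[]" v u "[]"] by simp

lemma dd_swap_3: "smooth_on UNIV f \<Longrightarrow> dd [v, u, u] f = dd [u, u, v] f"
  using dd_swap[of f "[]" v u "[u]"] dd_swap[of f "[u]" v u "[]"] by simp

lemma smooth_has_at': "smooth_on UNIV f \<Longrightarrow> (f has_derivative (\<lambda>h. frechet_derivative f (at x) h)) (at x)"
  using smooth_has_at by (metis eta_contract_eq)

lemma fd_dd: "frechet_derivative (dd vs f) (at x) v = dd (v # vs) f x"
  by (simp add: dderiv.simps)

lemma HopP_has:
  fixes G :: "(real^'d::finite) \<times> (real^'d) \<Rightarrow> complex"
  assumes sG: "smooth_on UNIV G" and dV: "\<And>x. V differentiable at x"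
  shows "(HopP V G has_derivative (\<lambda>h. (1/2) * (\<Sum>l\<in>UNIV. - dd [h, ey l, ey l] G p
       - 2 * \<i> * (of_real (snd h $ l) * dd [ey l] G p + of_real (snd p $ l) * dd [h, ey l] G p)
       + (of_real (snd h $ l) * of_real (snd p $ l) * G p + of_real (snd p $ l) * of_real (snd h $ l) * G p
          + of_real (snd p $ l) * of_real (snd p $ l) * dd [h] G p))
     + (of_real (frechet_derivative V (at (fst p)) (fst h)) * G p + of_real (V (fst p)) * dd [h] G p))) (at p)"
proof -
  have h2: "(dd [ey l, ey l] G has_derivative (\<lambda>h. dd [h, ey l, ey l] G p)) (at p)" for l
    using smooth_has_at'[OF smooth_dd[OF sG]] by (simp add: fd_dd)
  have h1: "(dd [ey l] G has_derivative (\<lambda>h. dd [h, ey l] G p)) (at p)" for l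
    using smooth_has_at'[OF smooth_dd[OF sG]] by (simp add: fd_dd)
  have h0: "(G has_derivative (\<lambda>h. dd [h] G p)) (at p)"
    using smooth_has_at'[OF sG] by (simp add: dderiv.simps)
  have hk: "((\<lambda>p. complex_of_real (snd p $ l)) has_derivative (\<lambda>h. complex_of_real (snd h $ l))) (at p)" for l
  proof -
    have bl: "bounded_linear (\<lambda>x::(real^'d)\<times>(real^'d). snd x $ l)"
      using bounded_linear_compose[OF bounded_linear_vec_nth[of l] bounded_linear_snd] by simp
    show ?thesis by (rule has_derivative_of_real[OF bounded_linear_imp_has_derivative[OF bl]])
  qed
  have hV: "((\<lambda>p. complex_of_real (V (fst p))) has_derivative (\<lambda>h. complex_of_real (frechet_derivative V (at (fst p)) (fst h)))) (at p)"
  proof -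
    have "(V has_derivative frechet_derivative V (at (fst p))) (at (fst p))" using dV frechet_derivative_works by blast
    from has_derivative_compose[OF has_derivative_fst[OF has_derivative_ident] this]
    show ?thesis by (intro has_derivative_of_real[of "\<lambda>p. V (fst p)", simplified]) (simp add: o_def)
  qed
  have hT: "((\<lambda>p. - dd [ey l, ey l] G p - 2 * \<i> * of_real (snd p $ l) * dd [ey l] G p
       + of_real (snd p $ l) * of_real (snd p $ l) * G p) has_derivative
      (\<lambda>h. - dd [h, ey l, ey l] G p
       - 2 * \<i> * (of_real (snd h $ l) * dd [ey l] G p + of_real (snd p $ l) * dd [h, ey l] G p)
       + (of_real (snd h $ l) * of_real (snd p $ l) * G p + of_real (snd p $ l) * of_real (snd h $ l) * G p
          + of_real (snd p $ l) * of_real (snd p $ l) * dd [h] G p))) (at p)" for l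
  proof -
    have a: "((\<lambda>p. 2 * \<i> * of_real (snd p $ l) * dd [ey l] G p) has_derivative
        (\<lambda>h. 2 * \<i> * (of_real (snd h $ l) * dd [ey l] G p + of_real (snd p $ l) * dd [h, ey l] G p))) (at p)"
    proof -
      have e: "(\<lambda>p. 2 * \<i> * of_real (snd p $ l) * dd [ey l] G p) = (\<lambda>p. (2 * \<i>) * (of_real (snd p $ l) * dd [ey l] G p))"
        by (simp add: mult.assoc)
      show ?thesis unfolding e
        by (rule has_derivative_eq_rhs[OF has_derivative_mult_right[OF has_derivative_mult[OF hk h1]]])
          (simp add: fun_eq_iff algebra_simps)
    qed
    have c: "((\<lambda>p. of_real (snd p $ l) * of_real (snd p $ l) * G p) has_derivative
        (\<lambda>h. of_real (snd h $ l) * of_real (snd p $ l) * G p + of_real (snd p $ l) * of_real (snd h $ l) * G p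
          + of_real (snd p $ l) * of_real (snd p $ l) * dd [h] G p)) (at p)"
      by (rule has_derivative_eq_rhs[OF has_derivative_mult[OF has_derivative_mult[OF hk hk] h0]]) (simp add: algebra_simps fun_eq_iff)
    show ?thesis using has_derivative_add[OF has_derivative_diff[OF has_derivative_minus[OF h2] a] c] by simp
  qed
  have "((\<lambda>p. (1/2) * (\<Sum>l\<in>UNIV. - dd [ey l, ey l] G p - 2 * \<i> * of_real (snd p $ l) * dd [ey l] G p
       + of_real (snd p $ l) * of_real (snd p $ l) * G p)) has_derivative
      (\<lambda>h. (1/2) * (\<Sum>l\<in>UNIV. - dd [h, ey l, ey l] G p
       - 2 * \<i> * (of_real (snd h $ l) * dd [ey l] G p + of_real (snd p $ l) * dd [h, ey l] G p)
       + (of_real (snd h $ l) * of_real (snd p $ l) * G p + of_real (snd p $ l) * of_real (snd h $ l) * G p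
          + of_real (snd p $ l) * of_real (snd p $ l) * dd [h] G p)))) (at p)"
    by (rule has_derivative_mult_right[OF has_derivative_sum[OF hT]])
  from has_derivative_add[OF this has_derivative_mult[OF hV h0]]
  show ?thesis unfolding HopP_def by (simp add: algebra_simps)
qed

lemma HopP_diff:
  fixes G :: "(real^'d::finite) \<times> (real^'d) \<Rightarrow> complex"
  assumes sG: "smooth_on UNIV G" and dV: "\<And>x. V differentiable at x"
  shows "HopP V G differentiable at p"
  using HopP_has[OF sG dV] differentiable_def by blast

lemma HopP_deriv:
  fixes G :: "(real^'d::finite) \<times> (real^'d) \<Rightarrow> complex"
  assumes sG: "smooth_on UNIV G" and dV: "\<And>x. V differentiable at x"
  shows "frechet_derivative (HopP V G) (at p) (ek j)
       = HopP V (dd [ek j] G) p + (- \<i> * dd [ey j] G p + of_real (snd p $ j) * G p)"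
proof -
  have V0: "frechet_derivative V (at x) 0 = 0" for x
    using dV frechet_derivative_works has_derivative_linear linear_0 by blast
  have fd: "frechet_derivative (HopP V G) (at p) (ek j) = (1/2) * (\<Sum>l\<in>UNIV. - dd [ek j, ey l, ey l] G p
       - 2 * \<i> * (of_real (axis j 1 $ l) * dd [ey l] G p + of_real (snd p $ l) * dd [ek j, ey l] G p)
       + (of_real (axis j 1 $ l) * of_real (snd p $ l) * G p + of_real (snd p $ l) * of_real (axis j 1 $ l) * G p
          + of_real (snd p $ l) * of_real (snd p $ l) * dd [ek j] G p))
     + (of_real (frechet_derivative V (at (fst p)) 0) * G p + of_real (V (fst p)) * dd [ek j] G p)"
    using fun_cong[OF frechet_derivative_at[OF HopP_has[OF sG dV, of p]], of "ek j", symmetric]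
    by (simp only: ek_simps)
  have sw: "dd [ek j, ey l, ey l] G = dd [ey l, ey l, ek j] G" "dd [ek j, ey l] G = dd [ey l, ek j] G" for l
    using dd_swap_3[OF sG, of "ek j" "ey l"] dd_swap1[OF sG, of "ek j" "ey l"] by auto
  have e2: "dd [ey l, ey l, ek j] G = dd [ey l, ey l] (dd [ek j] G)" "dd [ey l, ek j] G = dd [ey l] (dd [ek j] G)" for l
    using dderiv_app[of UNIV "[ey l, ey l]" "[ek j]" G] dderiv_app[of UNIV "[ey l]" "[ek j]" G] by auto
  define S1 where "S1 = (\<Sum>l\<in>UNIV. - dd [ey l, ey l] (dd [ek j] G) p
       - 2 * \<i> * of_real (snd p $ l) * dd [ey l] (dd [ek j] G) p + of_real (snd p $ l) * of_real (snd p $ l) * dd [ek j] G p)"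
  have "(\<Sum>l\<in>UNIV. - dd [ek j, ey l, ey l] G p
       - 2 * \<i> * (of_real (axis j 1 $ l) * dd [ey l] G p + of_real (snd p $ l) * dd [ek j, ey l] G p)
       + (of_real (axis j 1 $ l) * of_real (snd p $ l) * G p + of_real (snd p $ l) * of_real (axis j 1 $ l) * G p
          + of_real (snd p $ l) * of_real (snd p $ l) * dd [ek j] G p))
    = S1 + (\<Sum>l\<in>UNIV. (if l = j then - 2 * \<i> * dd [ey l] G p + 2 * of_real (snd p $ l) * G p else 0))"
    unfolding S1_def sum.distrib[symmetric] sw e2
    by (rule sum.cong) (auto simp: axis_def algebra_simps)
  also have "\<dots> = S1 + (- 2 * \<i> * dd [ey j] G p + 2 * of_real (snd p $ j) * G p)"
    by simp
  finally have sumeq: "(\<Sum>l\<in>UNIV. - dd [ek j, ey l, ey l] G p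
       - 2 * \<i> * (of_real (axis j 1 $ l) * dd [ey l] G p + of_real (snd p $ l) * dd [ek j, ey l] G p)
       + (of_real (axis j 1 $ l) * of_real (snd p $ l) * G p + of_real (snd p $ l) * of_real (axis j 1 $ l) * G p
          + of_real (snd p $ l) * of_real (snd p $ l) * dd [ek j] G p))
    = S1 + (- 2 * \<i> * dd [ey j] G p + 2 * of_real (snd p $ j) * G p)" .
  show ?thesis unfolding fd sumeq V0 unfolding HopP_def S1_def by (simp add: algebra_simps)
qed

lemma zero_deriv:
  assumes "\<And>p. F p = 0" "(F has_derivative F') (at p)"
  shows "F' h = 0"
proof -
  have "F = (\<lambda>_. 0)" using assms(1) by auto
  then have "(F has_derivative (\<lambda>_. 0)) (at p)" by simp
  with assms(2) have "F' = (\<lambda>_. 0)" using has_derivative_unique by blast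
  then show ?thesis by simp
qed

lemma has_deriv_Esnd:
  fixes Ev :: "real^'d::finite \<Rightarrow> real"
  assumes "Ev differentiable at (snd p)"
  shows "((\<lambda>p::(real^'d) \<times> (real^'d). complex_of_real (Ev (snd p))) has_derivative (\<lambda>h. complex_of_real (frechet_derivative Ev (at (snd p)) (snd h)))) (at p)"
proof -
  have "(Ev has_derivative frechet_derivative Ev (at (snd p))) (at (snd p))" using assms frechet_derivative_works by blast
  from has_derivative_compose[OF has_derivative_snd[OF has_derivative_ident] this]
  show ?thesis by (intro has_derivative_of_real[of "\<lambda>p. Ev (snd p)", simplified]) (simp add: o_def)
qed

lemma deriv_eig:
  fixes G R :: "(real^'d::finite) \<times> (real^'d) \<Rightarrow> complex" and Ev :: "real^'d \<Rightarrow> real"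
  assumes sG: "smooth_on UNIV G" and sEv: "smooth_on UNIV Ev" and dV: "\<And>x. V differentiable at x"
    and eq: "\<And>p. HopP V G p - of_real (Ev (snd p)) * G p + R p = 0"
    and Rd: "\<And>p. (R has_derivative R' p) (at p)"
  shows "HopP V (dd [ek j] G) p - of_real (Ev (snd p)) * dd [ek j] G p
     + (- \<i> * dd [ey j] G p + of_real (snd p $ j) * G p - of_real (dd [axis j 1] Ev (snd p)) * G p + R' p (ek j)) = 0"
proof -
  have hH: "(HopP V G has_derivative frechet_derivative (HopP V G) (at p)) (at p)"
    using HopP_diff[OF sG dV] frechet_derivative_works by blast
  have h0: "(G has_derivative (\<lambda>h. dd [h] G p)) (at p)"
    using smooth_has_at'[OF sG] by (simp add: dderiv.simps)
  have hE: "((\<lambda>p. of_real (Ev (snd p)) * G p) has_derivative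
       (\<lambda>h. of_real (Ev (snd p)) * dd [h] G p + of_real (frechet_derivative Ev (at (snd p)) (snd h)) * G p)) (at p)"
    by (rule has_derivative_mult[OF has_deriv_Esnd[OF smooth_diff_at[OF sEv]] h0])
  have "((\<lambda>p. HopP V G p - of_real (Ev (snd p)) * G p + R p) has_derivative
      (\<lambda>h. frechet_derivative (HopP V G) (at p) h - (of_real (Ev (snd p)) * dd [h] G p
          + of_real (frechet_derivative Ev (at (snd p)) (snd h)) * G p) + R' p h)) (at p)"
    by (rule has_derivative_add[OF has_derivative_diff[OF hH hE] Rd])
  from zero_deriv[OF eq this, of "ek j"]
  have "frechet_derivative (HopP V G) (at p) (ek j) - (of_real (Ev (snd p)) * dd [ek j] G p
          + of_real (frechet_derivative Ev (at (snd p)) (axis j 1)) * G p) + R' p (ek j) = 0" by simp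
  then show ?thesis unfolding HopP_deriv[OF sG dV] by (simp add: dderiv.simps algebra_simps)
qed

lemma cont_HopP:
  assumes "smooth_on UNIV H" "continuous_on UNIV V"
  shows "continuous_on UNIV (\<lambda>y. HopP V H (y,k))"
proof -
  have cVy: "continuous_on UNIV (\<lambda>y. complex_of_real (V y))" by (intro continuous_intros assms(2))
  show ?thesis unfolding HopP_def fst_conv snd_conv
    by (intro continuous_intros cont_dd_sl[OF assms(1)] cont_sl[OF assms(1)] cVy)
qed

lemma has_deriv_k:
  "((\<lambda>p::(real^'d::finite) \<times> (real^'d). complex_of_real (snd p $ l)) has_derivative (\<lambda>h. complex_of_real (snd h $ l))) (at p)"
proof -
  have bl: "bounded_linear (\<lambda>x::(real^'d)\<times>(real^'d). snd x $ l)"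
    using bounded_linear_compose[OF bounded_linear_vec_nth[of l] bounded_linear_snd] by simp
  show ?thesis by (rule has_derivative_of_real[OF bounded_linear_imp_has_derivative[OF bl]])
qed

context
  fixes b :: "'d::finite \<Rightarrow> real^'d" and Ti :: "real^'d \<Rightarrow> real^'d"
    and X :: "(real^'d) \<times> (real^'d) \<Rightarrow> complex" and V :: "real^'d \<Rightarrow> real" and E :: "real^'d \<Rightarrow> real"
  assumes Ti: "linear Ti" "\<And>c. Ti (Tb b c) = c" "\<And>y. Tb b (Ti y) = y"
    and sX: "smooth_on UNIV X" and pX: "yper b X"
    and dV: "\<And>x. V differentiable at x" and cV: "continuous_on UNIV V"
    and sE: "smooth_on UNIV E"
    and eig: "\<And>p. HopP V X p = of_real (E (snd p)) * X p"
    and nrm: "\<And>k. integral (fund_dom b) (\<lambda>y. cnj (X (y,k)) * X (y,k)) = 1"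
begin

definition Ip where "Ip F k = integral (fund_dom b) (\<lambda>y. cnj (X (y,k)) * F (y,k))"

lemma hasI: "smooth_on UNIV F \<Longrightarrow> ((\<lambda>y. cnj (X (y,k)) * F (y,k)) has_integral Ip F k) (fund_dom b)"
  unfolding Ip_def
  by (rule integrable_integral, rule cont_int_Y[OF Ti])
    (intro continuous_intros cont_sl[OF sX] cont_sl)

lemma hasIH: "smooth_on UNIV F \<Longrightarrow> ((\<lambda>y. cnj (X (y,k)) * HopP V F (y,k)) has_integral Ip (HopP V F) k) (fund_dom b)"
  unfolding Ip_def
  by (rule integrable_integral, rule cont_int_Y[OF Ti])
    (intro continuous_intros cont_sl[OF sX] cont_HopP cV)

lemma hasX: "((\<lambda>y. cnj (X (y,k)) * X (y,k)) has_integral 1) (fund_dom b)"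
  using hasI[OF sX, of k] nrm[of k] unfolding Ip_def by simp

lemma proj_sym:
  assumes sG: "smooth_on UNIV G" and pG: "yper b G"
  shows "Ip (HopP V G) k = of_real (E k) * Ip G k"
proof -
  have "Ip (HopP V G) k = integral (fund_dom b) (\<lambda>y. cnj (HopP V X (y,k)) * G (y,k))"
    unfolding Ip_def by (rule HopP_sym[OF Ti sX sG pX pG cV])
  also have "\<dots> = integral (fund_dom b) (\<lambda>y. of_real (E k) * (cnj (X (y,k)) * G (y,k)))"
    unfolding eig by (simp add: mult.assoc)
  also have "\<dots> = of_real (E k) * Ip G k"
    unfolding Ip_def using hasI[OF sG, of k] unfolding Ip_def
    by (intro integral_cmult_c) blast
  finally show ?thesis .
qed

lemma FH1pt: "HopP V (dd [ek j] X) p - of_real (E (snd p)) * dd [ek j] X p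
     + (- \<i> * dd [ey j] X p + of_real (snd p $ j) * X p - of_real (dd [axis j 1] E (snd p)) * X p) = 0"
  using deriv_eig[OF sX sE dV, of "\<lambda>_. 0" "\<lambda>_ _. 0" j p] eig by simp

lemma FH1: "- \<i> * Ip (dd [ey j] X) k + of_real (k $ j) - of_real (dd [axis j 1] E k) = 0"
proof -
  let ?G = "dd [ek j] X"
  have sG: "smooth_on UNIV ?G" by (rule smooth_dd[OF sX])
  have "((\<lambda>y. cnj (X (y,k)) * HopP V ?G (y,k) - of_real (E k) * (cnj (X (y,k)) * ?G (y,k))
      + (- \<i> * (cnj (X (y,k)) * dd [ey j] X (y,k)) + (of_real (k $ j) - of_real (dd [axis j 1] E k)) * (cnj (X (y,k)) * X (y,k))))
    has_integral (Ip (HopP V ?G) k - of_real (E k) * Ip ?G k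
      + (- \<i> * Ip (dd [ey j] X) k + (of_real (k $ j) - of_real (dd [axis j 1] E k)) * 1))) (fund_dom b)"
    by (intro has_integral_add has_integral_diff has_integral_mult_right hasIH hasI hasX sG smooth_dd[OF sX])
  moreover have "cnj (X (y,k)) * HopP V ?G (y,k) - of_real (E k) * (cnj (X (y,k)) * ?G (y,k))
      + (- \<i> * (cnj (X (y,k)) * dd [ey j] X (y,k)) + (of_real (k $ j) - of_real (dd [axis j 1] E k)) * (cnj (X (y,k)) * X (y,k))) = 0" for y
  proof -
    have "cnj (X (y,k)) * (HopP V ?G (y,k) - of_real (E k) * ?G (y,k)
      + (- \<i> * dd [ey j] X (y,k) + of_real (k $ j) * X (y,k) - of_real (dd [axis j 1] E k) * X (y,k))) = 0"
      using FH1pt[of j "(y,k)"] by simp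
    then show ?thesis by (simp add: algebra_simps)
  qed
  ultimately have "((\<lambda>y. 0) has_integral (Ip (HopP V ?G) k - of_real (E k) * Ip ?G k
      + (- \<i> * Ip (dd [ey j] X) k + (of_real (k $ j) - of_real (dd [axis j 1] E k)) * 1))) (fund_dom b)"
    by simp
  then have "Ip (HopP V ?G) k - of_real (E k) * Ip ?G k
      + (- \<i> * Ip (dd [ey j] X) k + (of_real (k $ j) - of_real (dd [axis j 1] E k)) * 1) = 0"
    using has_integral_unique has_integral_0 by blast
  then show ?thesis unfolding proj_sym[OF sG yper_dd[OF sX pX]] by (simp add: algebra_simps)
qed


lemma R1_has:
  "((\<lambda>p. - \<i> * dd [ey j] X p + of_real (snd p $ j) * X p - of_real (dd [axis j 1] E (snd p)) * X p) has_derivative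
    (\<lambda>h. - \<i> * dd [h, ey j] X p + (of_real (snd h $ j) * X p + of_real (snd p $ j) * dd [h] X p)
        - (of_real (dd [snd h, axis j 1] E (snd p)) * X p + of_real (dd [axis j 1] E (snd p)) * dd [h] X p))) (at p)"
proof -
  have h1: "(dd [ey j] X has_derivative (\<lambda>h. dd [h, ey j] X p)) (at p)"
    using smooth_has_at'[OF smooth_dd[OF sX]] by (simp add: fd_dd)
  have h0: "(X has_derivative (\<lambda>h. dd [h] X p)) (at p)"
    using smooth_has_at'[OF sX] by (simp add: dderiv.simps)
  have hE: "((\<lambda>p. complex_of_real (dd [axis j 1] E (snd p))) has_derivative (\<lambda>h. complex_of_real (dd [snd h, axis j 1] E (snd p)))) (at p)"
    using has_deriv_Esnd[OF smooth_diff_at[OF smooth_dd[OF sE]], of "[axis j 1]" p] by (simp add: fd_dd)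
  show ?thesis
    by (rule has_derivative_eq_rhs[OF has_derivative_diff[OF has_derivative_add[OF has_derivative_mult_right[OF h1]
        has_derivative_mult[OF has_deriv_k h0]] has_derivative_mult[OF hE h0]]])
      (simp add: fun_eq_iff algebra_simps)
qed

lemma FH2pt: "HopP V (dd [ek m, ek j] X) p - of_real (E (snd p)) * dd [ek m, ek j] X p
     + (- \<i> * dd [ey m, ek j] X p + of_real (snd p $ m) * dd [ek j] X p - of_real (dd [axis m 1] E (snd p)) * dd [ek j] X p
      + (- \<i> * dd [ek m, ey j] X p + (of_real (axis m 1 $ j) * X p + of_real (snd p $ j) * dd [ek m] X p)
        - (of_real (dd [axis m 1, axis j 1] E (snd p)) * X p + of_real (dd [axis j 1] E (snd p)) * dd [ek m] X p))) = 0"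
proof -
  have e: "dd [u] (dd [v] X) = dd [u, v] X" for u v using dderiv_app[of UNIV "[u]" "[v]" X] by simp
  from deriv_eig[OF smooth_dd[OF sX] sE dV, of "[ek j]" "\<lambda>p. - \<i> * dd [ey j] X p + of_real (snd p $ j) * X p - of_real (dd [axis j 1] E (snd p)) * X p", OF _ R1_has, of m p]
  show ?thesis using FH1pt unfolding e by (simp add: algebra_simps)
qed

lemma FH2: "- \<i> * Ip (dd [ey m, ek j] X) k - \<i> * Ip (dd [ek m, ey j] X) k
    + (of_real (k $ m) - of_real (dd [axis m 1] E k)) * Ip (dd [ek j] X) k
    + (of_real (k $ j) - of_real (dd [axis j 1] E k)) * Ip (dd [ek m] X) k
    + of_real (axis m 1 $ j) - of_real (dd [axis m 1, axis j 1] E k) = 0"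
proof -
  let ?G = "dd [ek m, ek j] X"
  have sG: "smooth_on UNIV ?G" by (rule smooth_dd[OF sX])
  have sd: "smooth_on UNIV (dd vs X)" for vs by (rule smooth_dd[OF sX])
  have "((\<lambda>y. cnj (X (y,k)) * HopP V ?G (y,k) - of_real (E k) * (cnj (X (y,k)) * ?G (y,k))
      + (- \<i> * (cnj (X (y,k)) * dd [ey m, ek j] X (y,k)) - \<i> * (cnj (X (y,k)) * dd [ek m, ey j] X (y,k))
      + (of_real (k $ m) - of_real (dd [axis m 1] E k)) * (cnj (X (y,k)) * dd [ek j] X (y,k))
      + (of_real (k $ j) - of_real (dd [axis j 1] E k)) * (cnj (X (y,k)) * dd [ek m] X (y,k))
      + (of_real (axis m 1 $ j) - of_real (dd [axis m 1, axis j 1] E k)) * (cnj (X (y,k)) * X (y,k))))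
    has_integral (Ip (HopP V ?G) k - of_real (E k) * Ip ?G k
      + (- \<i> * Ip (dd [ey m, ek j] X) k - \<i> * Ip (dd [ek m, ey j] X) k
      + (of_real (k $ m) - of_real (dd [axis m 1] E k)) * Ip (dd [ek j] X) k
      + (of_real (k $ j) - of_real (dd [axis j 1] E k)) * Ip (dd [ek m] X) k
      + (of_real (axis m 1 $ j) - of_real (dd [axis m 1, axis j 1] E k)) * 1))) (fund_dom b)"
    by (intro has_integral_add has_integral_diff has_integral_mult_right hasIH hasI hasX sG sd)
  moreover have "cnj (X (y,k)) * HopP V ?G (y,k) - of_real (E k) * (cnj (X (y,k)) * ?G (y,k))
      + (- \<i> * (cnj (X (y,k)) * dd [ey m, ek j] X (y,k)) - \<i> * (cnj (X (y,k)) * dd [ek m, ey j] X (y,k))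
      + (of_real (k $ m) - of_real (dd [axis m 1] E k)) * (cnj (X (y,k)) * dd [ek j] X (y,k))
      + (of_real (k $ j) - of_real (dd [axis j 1] E k)) * (cnj (X (y,k)) * dd [ek m] X (y,k))
      + (of_real (axis m 1 $ j) - of_real (dd [axis m 1, axis j 1] E k)) * (cnj (X (y,k)) * X (y,k))) = 0" for y
  proof -
    have "cnj (X (y,k)) * (HopP V ?G (y,k) - of_real (E k) * ?G (y,k)
     + (- \<i> * dd [ey m, ek j] X (y,k) + of_real (k $ m) * dd [ek j] X (y,k) - of_real (dd [axis m 1] E k) * dd [ek j] X (y,k)
      + (- \<i> * dd [ek m, ey j] X (y,k) + (of_real (axis m 1 $ j) * X (y,k) + of_real (k $ j) * dd [ek m] X (y,k))
        - (of_real (dd [axis m 1, axis j 1] E k) * X (y,k) + of_real (dd [axis j 1] E k) * dd [ek m] X (y,k))))) = 0"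
      using FH2pt[of m j "(y,k)"] by simp
    then show ?thesis by (simp add: algebra_simps)
  qed
  ultimately have "((\<lambda>y. 0) has_integral (Ip (HopP V ?G) k - of_real (E k) * Ip ?G k
      + (- \<i> * Ip (dd [ey m, ek j] X) k - \<i> * Ip (dd [ek m, ey j] X) k
      + (of_real (k $ m) - of_real (dd [axis m 1] E k)) * Ip (dd [ek j] X) k
      + (of_real (k $ j) - of_real (dd [axis j 1] E k)) * Ip (dd [ek m] X) k
      + (of_real (axis m 1 $ j) - of_real (dd [axis m 1, axis j 1] E k)) * 1))) (fund_dom b)"
    by simp
  then have "Ip (HopP V ?G) k - of_real (E k) * Ip ?G k
      + (- \<i> * Ip (dd [ey m, ek j] X) k - \<i> * Ip (dd [ek m, ey j] X) k
      + (of_real (k $ m) - of_real (dd [axis m 1] E k)) * Ip (dd [ek j] X) k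
      + (of_real (k $ j) - of_real (dd [axis j 1] E k)) * Ip (dd [ek m] X) k
      + (of_real (axis m 1 $ j) - of_real (dd [axis m 1, axis j 1] E k)) * 1) = 0"
    using has_integral_unique has_integral_0 by blast
  then show ?thesis unfolding proj_sym[OF sG yper_dd[OF sX pX]] by (simp add: algebra_simps)
qed

end

lemma pd_has:
  assumes "(f has_derivative f') (at x)"
  shows "pd f x l = f' (axis l 1)"
proof -
  have "f differentiable at x" using assms differentiable_def by blast
  then show ?thesis using pd_frechet frechet_derivative_at[OF assms] by metis
qed

lemma vec_expand: "(v::real^'n::finite) = (\<Sum>j\<in>UNIV. (v $ j) *\<^sub>R axis j 1)"
  using basis_expansion[of v] unfolding scalar_mult_eq_scaleR by simp

lemma vec_has_derivative:
  fixes f :: "'a::real_normed_vector \<Rightarrow> real^'n::finite"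
  assumes "\<And>j. ((\<lambda>x. f x $ j) has_derivative (\<lambda>h. f' h $ j)) F"
  shows "(f has_derivative f') F"
proof -
  show ?thesis
  proof -
    have bl: "bounded_linear f'"
    proof -
      have "bounded_linear (\<lambda>h. f' h $ j)" for j using assms has_derivative_bounded_linear by blast
      then have "bounded_linear (\<lambda>h. (f' h $ j) *\<^sub>R axis j (1::real))" for j
        using bounded_linear_compose[OF bounded_linear_scaleR_left[of "axis j (1::real)"]] by blast
      then have "bounded_linear (\<lambda>h. \<Sum>j\<in>UNIV. (f' h $ j) *\<^sub>R axis j (1::real))"
        by (intro bounded_linear_sum) auto
      moreover have "(\<lambda>h. \<Sum>j\<in>UNIV. (f' h $ j) *\<^sub>R axis j (1::real)) = f'"
        by (rule ext) (rule vec_expand[symmetric])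
      ultimately show ?thesis by simp
    qed
    have "((\<lambda>x. \<Sum>j\<in>UNIV. (f x $ j) *\<^sub>R axis j (1::real)) has_derivative (\<lambda>h. \<Sum>j\<in>UNIV. (f' h $ j) *\<^sub>R axis j (1::real))) F"
      by (intro has_derivative_sum has_derivative_scaleR_left assms)
    moreover have "(\<lambda>x. \<Sum>j\<in>UNIV. (f x $ j) *\<^sub>R axis j (1::real)) = f"
      by (rule ext) (rule vec_expand[symmetric])
    moreover have "(\<lambda>h. \<Sum>j\<in>UNIV. (f' h $ j) *\<^sub>R axis j (1::real)) = f'"
      by (rule ext) (rule vec_expand[symmetric])
    ultimately show ?thesis by simp
  qed
qed


lemma chainX:
  fixes X :: "(real^'d::finite) \<times> (real^'d) \<Rightarrow> complex" and G :: "real^'e::finite \<Rightarrow> real^'d"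
  assumes sX: "smooth_on UNIV X" and G: "(G has_derivative G') (at x)"
  shows "pd (\<lambda>x'. X (y, G x')) x l = (\<Sum>j\<in>UNIV. of_real (G' (axis l 1) $ j) * dd [ek j] X (y, G x))"
proof -
  have hp: "((\<lambda>x'. (y, G x')) has_derivative (\<lambda>h. (0, G' h))) (at x)"
    by (rule has_derivative_Pair[OF has_derivative_const G, simplified])
  have hX: "(X has_derivative frechet_derivative X (at (y, G x))) (at (y, G x))"
    using smooth_has_at[OF sX] .
  from has_derivative_compose[OF hp hX]
  have "((\<lambda>x'. X (y, G x')) has_derivative (\<lambda>h. frechet_derivative X (at (y, G x)) (0, G' h))) (at x)"
    by (simp add: o_def)
  then have "pd (\<lambda>x'. X (y, G x')) x l = frechet_derivative X (at (y, G x)) (0, G' (axis l 1))"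
    by (rule pd_has)
  also have "(0::real^'d, G' (axis l 1)) = (\<Sum>j\<in>UNIV. (G' (axis l 1) $ j) *\<^sub>R ek j)"
    using vec_expand[of "G' (axis l 1)"] by (simp add: ek_def sum_prod fun_eq_iff)
  also have "frechet_derivative X (at (y, G x)) (\<Sum>j\<in>UNIV. (G' (axis l 1) $ j) *\<^sub>R ek j)
      = (\<Sum>j\<in>UNIV. (G' (axis l 1) $ j) *\<^sub>R frechet_derivative X (at (y, G x)) (ek j))"
    using has_derivative_linear[OF hX] by (simp add: linear_sum linear_scale)
  finally show ?thesis by (simp add: dderiv.simps scaleR_conv_of_real)
qed

lemma chainR:
  fixes F :: "real^'d::finite \<Rightarrow> real" and G :: "real^'e::finite \<Rightarrow> real^'d"
  assumes sF: "smooth_on UNIV F" and G: "(G has_derivative G') (at x)"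
  shows "pd (\<lambda>x'. F (G x')) x l = (\<Sum>j\<in>UNIV. G' (axis l 1) $ j * dd [axis j 1] F (G x))"
proof -
  have hF: "(F has_derivative frechet_derivative F (at (G x))) (at (G x))"
    using smooth_has_at[OF sF] .
  from has_derivative_compose[OF G hF]
  have "((\<lambda>x'. F (G x')) has_derivative (\<lambda>h. frechet_derivative F (at (G x)) (G' h))) (at x)"
    by (simp add: o_def)
  then have "pd (\<lambda>x'. F (G x')) x l = frechet_derivative F (at (G x)) (G' (axis l 1))"
    by (rule pd_has)
  also have "\<dots> = frechet_derivative F (at (G x)) (\<Sum>j\<in>UNIV. (G' (axis l 1) $ j) *\<^sub>R axis j 1)"
    using vec_expand[of "G' (axis l 1)"] by simp
  also have "\<dots> = (\<Sum>j\<in>UNIV. (G' (axis l 1) $ j) *\<^sub>R frechet_derivative F (at (G x)) (axis j 1))"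
    using has_derivative_linear[OF hF] by (simp add: linear_sum linear_scale)
  finally show ?thesis by (simp add: dderiv.simps)
qed

lemma pd_comp_has:
  fixes G :: "real^'e::finite \<Rightarrow> real^'d::finite"
  assumes G: "(G has_derivative G') (at x)"
  shows "pd (\<lambda>x'. G x' $ j) x l = G' (axis l 1) $ j"
proof -
  have "((\<lambda>x'. G x' $ j) has_derivative (\<lambda>h. G' h $ j)) (at x)"
    using bounded_linear.has_derivative[OF bounded_linear_vec_nth G] by simp
  then show ?thesis by (rule pd_has)
qed

lemma pd_mult:
  fixes f g :: "real^'d::finite \<Rightarrow> complex"
  assumes "f differentiable at x" "g differentiable at x"
  shows "pd (\<lambda>z. f z * g z) x l = pd f x l * g x + f x * pd g x l"
proof -
  have fd: "(f has_derivative frechet_derivative f (at x)) (at x)" using assms(1) frechet_derivative_works by blast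
  have gd: "(g has_derivative frechet_derivative g (at x)) (at x)" using assms(2) frechet_derivative_works by blast
  show ?thesis
    using pd_has[OF has_derivative_mult[OF fd gd]] pd_frechet[OF assms(1)] pd_frechet[OF assms(2)]
    by (simp add: algebra_simps)
qed

lemma pd_diff:
  fixes f g :: "real^'d::finite \<Rightarrow> 'b::real_normed_vector"
  assumes "f differentiable at x" "g differentiable at x"
  shows "pd (\<lambda>z. f z - g z) x l = pd f x l - pd g x l"
proof -
  have fd: "(f has_derivative frechet_derivative f (at x)) (at x)" using assms(1) frechet_derivative_works by blast
  have gd: "(g has_derivative frechet_derivative g (at x)) (at x)" using assms(2) frechet_derivative_works by blast
  show ?thesis
    using pd_has[OF has_derivative_diff[OF fd gd]] pd_frechet[OF assms(1)] pd_frechet[OF assms(2)]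
    by simp
qed

lemma pd_minus:
  fixes f :: "real^'d::finite \<Rightarrow> 'b::real_normed_vector"
  assumes "f differentiable at x"
  shows "pd (\<lambda>z. - f z) x l = - pd f x l"
proof -
  have fd: "(f has_derivative frechet_derivative f (at x)) (at x)" using assms(1) frechet_derivative_works by blast
  show ?thesis using pd_has[OF has_derivative_minus[OF fd]] pd_frechet[OF assms(1)] by simp
qed

lemma pd_cmult:
  fixes f :: "real^'d::finite \<Rightarrow> complex"
  assumes "f differentiable at x"
  shows "pd (\<lambda>z. c * f z) x l = c * pd f x l"
proof -
  have fd: "(f has_derivative frechet_derivative f (at x)) (at x)" using assms(1) frechet_derivative_works by blast
  show ?thesis using pd_has[OF has_derivative_mult_right[OF fd]] pd_frechet[OF assms(1)] by simp
qed

lemma pd_cong: "(\<And>z. f z = g z) \<Longrightarrow> pd f x l = pd g x l"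
  by (metis ext)

lemma nontriv_Ico: "0 \<le> s \<Longrightarrow> s < (\<tau>::real) \<Longrightarrow> at s within {0..<\<tau>} \<noteq> bot"
proof -
  assume a: "0 \<le> s" "s < \<tau>"
  have "s islimpt {s<..<\<tau>}" using islimpt_greaterThanLessThan1[OF a(2)] .
  then have "s islimpt {0..<\<tau>}" by (rule islimpt_subset) (use a in auto)
  then show ?thesis using trivial_limit_within by blast
qed

context
  fixes \<tau> :: real
  assumes tau: "\<tau> > 0"
begin

abbreviation "SS \<equiv> ({0..<\<tau>} \<times> (UNIV :: (real^'d::finite) set))"

lemma A1:
  fixes F :: "real \<times> (real^'d::finite) \<Rightarrow> 'b::real_normed_vector"
  assumes sF: "smooth_on SS F" and s: "s \<in> {0..<\<tau>}"
  shows "((\<lambda>z. F (s,z)) has_derivative (\<lambda>w. dderiv SS [(0,w)] F (s,z))) (at z)"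
proof -
  have 1: "\<And>p. p \<in> SS \<Longrightarrow> (F has_derivative frechet_derivative F (at p within SS)) (at p within SS)"
    using smooth_has_derivative[OF sF] by blast
  have 2: "((\<lambda>z. (s, z)) has_derivative (\<lambda>w. (0, w))) (at z within UNIV)"
    by (auto intro!: derivative_eq_intros)
  have 3: "(\<lambda>z. (s, z)) ` UNIV \<subseteq> SS" using s by auto
  from has_derivative_in_compose2[OF 1 3 UNIV_I 2]
  show ?thesis by (simp add: dderiv.simps)
qed

lemma A1pd:
  fixes F :: "real \<times> (real^'d::finite) \<Rightarrow> 'b::real_normed_vector"
  assumes sF: "smooth_on SS F" and s: "s \<in> {0..<\<tau>}"
  shows "pd (\<lambda>z. F (s,z)) z l = dderiv SS [(0, axis l 1)] F (s,z)"
  using pd_has[OF A1[OF sF s]] .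

lemma A2:
  fixes F :: "real \<times> (real^'d::finite) \<Rightarrow> 'b::real_normed_vector"
  assumes sF: "smooth_on SS F" and s: "s \<in> {0..<\<tau>}"
  shows "((\<lambda>s. F (s,z)) has_vector_derivative dderiv SS [(1,0)] F (s,z)) (at s within {0..<\<tau>})"
proof -
  have "((\<lambda>r. F ((0,z) + r *\<^sub>R (1,0))) has_vector_derivative dderiv SS [(1,0)] F ((0,z) + s *\<^sub>R (1,0))) (at s within {0..<\<tau>})"
    by (rule smooth_line_vd[OF sF]) (use s in auto)
  then show ?thesis by simp
qed

lemma A2dt:
  fixes F :: "real \<times> (real^'d::finite) \<Rightarrow> 'b::real_normed_vector"
  assumes sF: "smooth_on SS F" and s: "s \<in> {0..<\<tau>}" and eq: "\<And>r. r \<in> {0..<\<tau>} \<Longrightarrow> g r = F (r, z)"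
  shows "dt \<tau> g s = dderiv SS [(1,0)] F (s,z)"
proof -
  have "(g has_vector_derivative dderiv SS [(1,0)] F (s,z)) (at s within {0..<\<tau>})"
    by (rule has_vector_derivative_transform[OF s eq A2[OF sF s]])
  then show ?thesis unfolding dt_def using nontriv_Ico s by (intro vector_derivative_within) auto
qed

lemma schwarz_S:
  fixes F :: "real \<times> (real^'d::finite) \<Rightarrow> 'b::real_normed_vector"
  assumes sF: "smooth_on SS F" and s: "s \<in> {0..<\<tau>}"
    and u: "fst u \<in> {0..1}" and v: "fst v \<in> {0..1}"
  shows "dderiv SS [v,u] F (s,z) = dderiv SS [u,v] F (s,z)"
proof (rule schwarz[OF sF])
  show "(s,z) \<in> SS" using s by auto
  show "0 < (\<tau> - s) / 3" using s by auto
  fix a b :: real assume ab: "0 \<le> a" "a \<le> (\<tau> - s) / 3" "0 \<le> b" "b \<le> (\<tau> - s) / 3"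
  have "0 \<le> s + a * fst u + b * fst v" using s u v ab by (auto intro!: add_nonneg_nonneg)
  moreover have "s + a * fst u + b * fst v < \<tau>"
  proof -
    have "a * fst u \<le> a" using ab u by (auto intro: mult_left_le)
    moreover have "b * fst v \<le> b" using ab v by (auto intro: mult_left_le)
    ultimately show ?thesis using ab s by auto
  qed
  ultimately show "(s,z) + a *\<^sub>R u + b *\<^sub>R v \<in> SS" by (cases u, cases v) auto
qed

end

context
  fixes \<tau> :: real and \<phi> :: "real \<Rightarrow> real^'d::finite \<Rightarrow> real"
  assumes tau: "\<tau> > 0" and sPhi: "smooth_on ({0..<\<tau>} \<times> UNIV) (\<lambda>(s, z). \<phi> s z)"
begin

abbreviation "Phi \<equiv> (\<lambda>(s, z). \<phi> s z)"

lemma sPj: "smooth_on ({0..<\<tau>} \<times> UNIV) (dderiv ({0..<\<tau>} \<times> UNIV) vs Phi)"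
  by (rule smooth_dd[OF sPhi])

lemma G1: "s \<in> {0..<\<tau>} \<Longrightarrow> pd (\<phi> s) z j = dderiv ({0..<\<tau>} \<times> UNIV) [(0, axis j 1)] Phi (s,z)"
  using A1pd[OF tau sPhi, of s z j] by simp

lemma G2: "s \<in> {0..<\<tau>} \<Longrightarrow> (grad (\<phi> s) has_derivative
     (\<lambda>w. \<chi> j. dderiv ({0..<\<tau>} \<times> UNIV) [(0,w),(0,axis j 1)] Phi (s,z))) (at z)"
proof (rule vec_has_derivative)
  fix j assume s: "s \<in> {0..<\<tau>}"
  have e: "(\<lambda>z'. grad (\<phi> s) z' $ j) = (\<lambda>z'. dderiv ({0..<\<tau>} \<times> UNIV) [(0, axis j 1)] Phi (s,z'))"
    using G1[OF s] by (simp add: grad_def)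
  show "((\<lambda>x. grad (\<phi> s) x $ j) has_derivative
      (\<lambda>h. (\<chi> j. dderiv ({0..<\<tau>} \<times> UNIV) [(0, h), (0, axis j 1)] Phi (s, z)) $ j)) (at z)"
    unfolding e using A1[OF tau sPj s, of "[(0, axis j 1)]" z] by (simp add: dderiv_app)
qed

lemma G3: "t \<in> {0..<\<tau>} \<Longrightarrow> pd (\<lambda>x'. pd (\<phi> t) x' j) x l = dderiv ({0..<\<tau>} \<times> UNIV) [(0,axis l 1),(0,axis j 1)] Phi (t,x)"
proof -
  assume t: "t \<in> {0..<\<tau>}"
  have "pd (\<lambda>x'. pd (\<phi> t) x' j) x l = pd (\<lambda>x'. dderiv ({0..<\<tau>} \<times> UNIV) [(0, axis j 1)] Phi (t,x')) x l"
    using G1[OF t] by simp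
  also have "\<dots> = dderiv ({0..<\<tau>} \<times> UNIV) [(0,axis l 1),(0,axis j 1)] Phi (t,x)"
    using A1pd[OF tau sPj t, of "[(0, axis j 1)]" x l] by (simp add: dderiv_app)
  finally show ?thesis .
qed

lemma G3sym: "t \<in> {0..<\<tau>} \<Longrightarrow> pd (\<lambda>x'. pd (\<phi> t) x' j) x l = pd (\<lambda>x'. pd (\<phi> t) x' l) x j"
  unfolding G3 by (rule schwarz_S[OF tau sPhi]) auto

lemma G4: "t \<in> {0..<\<tau>} \<Longrightarrow> ((\<lambda>s. grad (\<phi> s) x) has_vector_derivative
    (\<chi> j. dderiv ({0..<\<tau>} \<times> UNIV) [(1,0),(0,axis j 1)] Phi (t,x))) (at t within {0..<\<tau>})"
  unfolding has_vector_derivative_def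
proof (rule vec_has_derivative)
  fix j assume t: "t \<in> {0..<\<tau>}"
  have "((\<lambda>s. grad (\<phi> s) x $ j) has_vector_derivative dderiv ({0..<\<tau>} \<times> UNIV) [(1,0)] (dderiv ({0..<\<tau>} \<times> UNIV) [(0, axis j 1)] Phi) (t,x)) (at t within {0..<\<tau>})"
    by (rule has_vector_derivative_transform[OF t _ A2[OF tau sPj t]]) (simp add: grad_def G1)
  then show "((\<lambda>s. grad (\<phi> s) x $ j) has_derivative
      (\<lambda>h. (h *\<^sub>R (\<chi> j. dderiv ({0..<\<tau>} \<times> UNIV) [(1, 0), (0, axis j 1)] Phi (t, x))) $ j)) (at t within {0..<\<tau>})"
    unfolding has_vector_derivative_def by (simp add: dderiv_app)
qed

lemma G5: "t \<in> {0..<\<tau>} \<Longrightarrow> dt \<tau> (\<lambda>s. pd (\<phi> s) x j) t = dderiv ({0..<\<tau>} \<times> UNIV) [(1,0),(0,axis j 1)] Phi (t,x)"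
  using A2dt[OF tau sPj[of "[(0, axis j 1)]"], where s=t and g="\<lambda>s. pd (\<phi> s) x j" and z=x] G1 by (simp add: dderiv_app)

lemma G6:
  fixes En U :: "real^'d \<Rightarrow> real"
  assumes t: "t \<in> {0..<\<tau>}" and sEn: "smooth_on UNIV En" and dU: "\<And>z. U differentiable at z"
    and eik: "\<And>s z. s \<in> {0..<\<tau>} \<Longrightarrow> dt \<tau> (\<lambda>s'. \<phi> s' z) s + En (grad (\<phi> s) z) + U z = 0"
  shows "dt \<tau> (\<lambda>s. pd (\<phi> s) x j) t = - (\<Sum>l\<in>UNIV. pd (\<lambda>x'. pd (\<phi> t) x' l) x j * dd [axis l 1] En (grad (\<phi> t) x)) - pd U x j"
proof -
  let ?S = "{0..<\<tau>} \<times> (UNIV :: (real^'d) set)"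
  have "dt \<tau> (\<lambda>s. pd (\<phi> s) x j) t = dderiv ?S [(0,axis j 1),(1,0)] Phi (t,x)"
    unfolding G5[OF t] by (rule schwarz_S[OF tau sPhi t]) auto
  also have "\<dots> = pd (\<lambda>z. dderiv ?S [(1,0)] Phi (t,z)) x j"
    using A1pd[OF tau sPj t, of "[(1,0)]" x j] by (simp add: dderiv_app)
  also have "\<dots> = pd (\<lambda>z. - En (grad (\<phi> t) z) - U z) x j"
  proof (rule pd_cong)
    fix z
    have "dt \<tau> (\<lambda>s'. \<phi> s' z) t = dderiv ?S [(1,0)] Phi (t,z)"
      using A2dt[OF tau sPhi t, where g="\<lambda>s'. \<phi> s' z" and z=z] by simp
    then show "dderiv ?S [(1,0)] Phi (t,z) = - En (grad (\<phi> t) z) - U z" using eik[OF t, of z] by simp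
  qed
  also have "\<dots> = - pd (\<lambda>z. En (grad (\<phi> t) z)) x j - pd U x j"
  proof -
    have dE: "(\<lambda>z. En (grad (\<phi> t) z)) differentiable at x"
      using has_derivative_compose[OF G2[OF t] smooth_has_at[OF sEn]] differentiable_def by (auto simp: o_def)
    have "pd (\<lambda>z. - En (grad (\<phi> t) z) - U z) x j = pd (\<lambda>z. - En (grad (\<phi> t) z)) x j - pd U x j"
      by (rule pd_diff) (use dE dU differentiable_minus in auto)
    also have "pd (\<lambda>z. - En (grad (\<phi> t) z)) x j = - pd (\<lambda>z. En (grad (\<phi> t) z)) x j"
      by (rule pd_minus[OF dE])
    finally show ?thesis .
  qed
  also have "pd (\<lambda>z. En (grad (\<phi> t) z)) x j = (\<Sum>l\<in>UNIV. pd (\<lambda>x'. pd (\<phi> t) x' l) x j * dd [axis l 1] En (grad (\<phi> t) x))"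
    unfolding chainR[OF sEn G2[OF t]] G3[OF t] by simp
  finally show ?thesis .
qed

end

lemma chainXt:
  fixes X :: "(real^'d::finite) \<times> (real^'d) \<Rightarrow> complex" and G :: "real \<Rightarrow> real^'d"
  assumes sX: "smooth_on UNIV X" and G: "(G has_vector_derivative Gv) (at t within T)"
  shows "((\<lambda>s. X (y, G s)) has_vector_derivative (\<Sum>j\<in>UNIV. of_real (Gv $ j) * dd [ek j] X (y, G t))) (at t within T)"
proof -
  have hp: "((\<lambda>s. (y, G s)) has_derivative (\<lambda>h. (0, h *\<^sub>R Gv))) (at t within T)"
    using has_derivative_Pair[OF has_derivative_const[of y] G[unfolded has_vector_derivative_def]] by simp
  have hX: "(X has_derivative frechet_derivative X (at (y, G t))) (at (y, G t))"
    using smooth_has_at[OF sX] .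
  from has_derivative_compose[OF hp hX]
  have 1: "((\<lambda>s. X (y, G s)) has_derivative (\<lambda>h. frechet_derivative X (at (y, G t)) (0, h *\<^sub>R Gv))) (at t within T)"
    by (simp add: o_def)
  have lin: "linear (frechet_derivative X (at (y, G t)))" using has_derivative_linear[OF hX] .
  have "(0::real^'d, h *\<^sub>R Gv) = h *\<^sub>R (\<Sum>j\<in>UNIV. (Gv $ j) *\<^sub>R ek j)" for h
    using vec_expand[of Gv] by (simp add: ek_def sum_prod fun_eq_iff scaleR_sum_right)
  then have "frechet_derivative X (at (y, G t)) (0, h *\<^sub>R Gv) = h *\<^sub>R (\<Sum>j\<in>UNIV. (Gv $ j) *\<^sub>R frechet_derivative X (at (y, G t)) (ek j))" for h
    using lin by (simp add: linear_sum linear_scale)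
  with 1 show ?thesis unfolding has_vector_derivative_def by (simp add: dderiv.simps scaleR_conv_of_real)
qed

context
  fixes \<tau> :: real and \<phi> :: "real \<Rightarrow> real^'d::finite \<Rightarrow> real" and a0 :: "real \<Rightarrow> real^'d \<Rightarrow> complex"
    and X :: "(real^'d) \<times> (real^'d) \<Rightarrow> complex" and t :: real
  assumes tau: "\<tau> > 0" and sPhi: "smooth_on ({0..<\<tau>} \<times> UNIV) (\<lambda>(s, z). \<phi> s z)"
    and sA: "smooth_on ({0..<\<tau>} \<times> UNIV) (\<lambda>(s, z). a0 s z)"
    and sX: "smooth_on UNIV X" and t: "t \<in> {0..<\<tau>}"
begin

lemma sAd: "smooth_on ({0..<\<tau>} \<times> UNIV) (dderiv ({0..<\<tau>} \<times> UNIV) vs (\<lambda>(s, z). a0 s z))"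
  by (rule smooth_dd[OF sA])

lemma a_diff: "(a0 t) differentiable at z"
  using A1[OF tau sA t, of z] differentiable_def by auto

lemma T1: "dt \<tau> (\<lambda>s. a0 s x * X (y, grad (\<phi> s) x)) t
   = dt \<tau> (\<lambda>s. a0 s x) t * X (y, grad (\<phi> t) x)
     + a0 t x * (\<Sum>j\<in>UNIV. of_real (dt \<tau> (\<lambda>s. pd (\<phi> s) x j) t) * dd [ek j] X (y, grad (\<phi> t) x))"
proof -
  let ?S = "{0..<\<tau>} \<times> (UNIV :: (real^'d) set)"
  have ha: "((\<lambda>s. a0 s x) has_vector_derivative dt \<tau> (\<lambda>s. a0 s x) t) (at t within {0..<\<tau>})"
    using A2[OF tau sA t, of x] A2dt[OF tau sA t, where g = "\<lambda>s. a0 s x" and z = x] by simp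
  have hg: "((\<lambda>s. X (y, grad (\<phi> s) x)) has_vector_derivative
      (\<Sum>j\<in>UNIV. of_real (dt \<tau> (\<lambda>s. pd (\<phi> s) x j) t) * dd [ek j] X (y, grad (\<phi> t) x))) (at t within {0..<\<tau>})"
    using chainXt[OF sX G4[OF tau sPhi t, of x], of y] G5[OF tau sPhi t, of x] by simp
  have "((\<lambda>s. a0 s x * X (y, grad (\<phi> s) x)) has_vector_derivative
     (dt \<tau> (\<lambda>s. a0 s x) t * X (y, grad (\<phi> t) x)
      + a0 t x * (\<Sum>j\<in>UNIV. of_real (dt \<tau> (\<lambda>s. pd (\<phi> s) x j) t) * dd [ek j] X (y, grad (\<phi> t) x)))) (at t within {0..<\<tau>})"
    using has_vector_derivative_mult[OF ha hg] by (simp add: add.commute)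
  then show ?thesis unfolding dt_def using nontriv_Ico t
    by (subst vector_derivative_within) (auto simp: dt_def)
qed

lemma T2: "pd (\<lambda>x'. a0 t x' * X (y, grad (\<phi> t) x')) x l
   = pd (a0 t) x l * X (y, grad (\<phi> t) x)
     + a0 t x * (\<Sum>j\<in>UNIV. of_real (pd (\<lambda>x'. pd (\<phi> t) x' j) x l) * dd [ek j] X (y, grad (\<phi> t) x))"
proof -
  have dX: "(\<lambda>x'. X (y, grad (\<phi> t) x')) differentiable at x"
    using has_derivative_compose[OF has_derivative_Pair[OF has_derivative_const[of y] G2[OF tau sPhi t, of x]] smooth_has_at[OF sX]]
    differentiable_def by (auto simp: o_def)
  show ?thesis
    unfolding pd_mult[OF a_diff dX] chainX[OF sX G2[OF tau sPhi t]] G3[OF tau sPhi t] by simp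
qed

lemma T4: "pd (\<lambda>x'. pd (\<lambda>y'. a0 t x' * X (y', grad (\<phi> t) x')) y l) x l
   = pd (a0 t) x l * dd [ey l] X (y, grad (\<phi> t) x)
     + a0 t x * (\<Sum>j\<in>UNIV. of_real (pd (\<lambda>x'. pd (\<phi> t) x' j) x l) * dd [ek j, ey l] X (y, grad (\<phi> t) x))"
proof -
  have sX1: "smooth_on UNIV (dd [ey l] X)" by (rule smooth_dd[OF sX])
  have "pd (\<lambda>x'. pd (\<lambda>y'. a0 t x' * X (y', grad (\<phi> t) x')) y l) x l
      = pd (\<lambda>x'. a0 t x' * dd [ey l] X (y, grad (\<phi> t) x')) x l"
  proof (rule pd_cong)
    fix x'
    show "pd (\<lambda>y'. a0 t x' * X (y', grad (\<phi> t) x')) y l = a0 t x' * dd [ey l] X (y, grad (\<phi> t) x')"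
    proof -
      have d0: "(\<lambda>y'. X (y', grad (\<phi> t) x')) differentiable at y" by (rule smooth_diff_at[OF smooth_sl_y[OF sX]])
      show ?thesis using pd_cmult[OF d0, where c = "a0 t x'" and l = l] pd_sl_y'[OF sX, where k = "grad (\<phi> t) x'" and y = y and l = l]
        by simp
    qed
  qed
  also have "\<dots> = pd (a0 t) x l * dd [ey l] X (y, grad (\<phi> t) x)
     + a0 t x * (\<Sum>j\<in>UNIV. of_real (pd (\<lambda>x'. pd (\<phi> t) x' j) x l) * dd [ek j] (dd [ey l] X) (y, grad (\<phi> t) x))"
  proof -
    have dX: "(\<lambda>x'. dd [ey l] X (y, grad (\<phi> t) x')) differentiable at x"
      using has_derivative_compose[OF has_derivative_Pair[OF has_derivative_const[of y] G2[OF tau sPhi t, of x]] smooth_has_at[OF sX1]]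
      differentiable_def by (auto simp: o_def)
    show ?thesis
      unfolding pd_mult[OF a_diff dX] chainX[OF sX1 G2[OF tau sPhi t]] G3[OF tau sPhi t] by simp
  qed
  finally show ?thesis by (simp add: dderiv_app)
qed

end

lemma sum_sym_swap:
  fixes p :: "'d::finite \<Rightarrow> 'd \<Rightarrow> 'a::comm_ring_1"
  assumes "\<And>j l. p j l = p l j"
  shows "(\<Sum>l\<in>UNIV. \<Sum>j\<in>UNIV. p j l * f l j) = (\<Sum>l\<in>UNIV. \<Sum>j\<in>UNIV. p j l * f j l)"
proof -
  have "(\<Sum>l\<in>UNIV. \<Sum>j\<in>UNIV. p j l * f l j) = (\<Sum>j\<in>UNIV. \<Sum>l\<in>UNIV. p j l * f l j)"
    by (rule sum.swap)
  also have "\<dots> = (\<Sum>j\<in>UNIV. \<Sum>l\<in>UNIV. p l j * f l j)" using assms by simp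
  finally show ?thesis .
qed

lemma final_algebra:
  fixes c_at a :: complex and al A B :: "'d::finite \<Rightarrow> complex" and C :: "'d \<Rightarrow> 'd \<Rightarrow> complex"
    and ph El Ul pt :: "'d \<Rightarrow> real" and phh Ell :: "'d \<Rightarrow> 'd \<Rightarrow> real" and lam N na :: real
  assumes F1: "\<And>j. - \<i> * B j + of_real (ph j) - of_real (El j) = 0"
    and F2: "\<And>m j. - \<i> * C m j - \<i> * C j m + (of_real (ph m) - of_real (El m)) * A j
        + (of_real (ph j) - of_real (El j)) * A m + of_real (axis m 1 $ j) - of_real (Ell m j) = 0"
    and F3: "\<And>j. pt j = - (\<Sum>l\<in>UNIV. phh l j * El l) - Ul j"
    and F4: "\<And>j l. phh j l = phh l j"
  shows "\<i> * (c_at * 1 + a * (\<Sum>j\<in>UNIV. of_real (pt j) * A j))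
      + \<i> * (\<Sum>l\<in>UNIV. of_real (ph l) * (al l * 1 + a * (\<Sum>j\<in>UNIV. of_real (phh j l) * A j)))
      + \<i> / 2 * of_real (\<Sum>l\<in>UNIV. phh l l) * (a * 1)
      + (\<Sum>l\<in>UNIV. al l * B l + a * (\<Sum>j\<in>UNIV. of_real (phh j l) * C l j))
      - of_real lam * (of_real na * a * of_real N)
    = \<i> * ((c_at + ((\<Sum>l\<in>UNIV. of_real (El l) * al l) + 1/2 * of_real (\<Sum>l\<in>UNIV. \<Sum>j\<in>UNIV. phh j l * Ell j l) * a)
        - (\<Sum>l\<in>UNIV. A l * of_real (Ul l)) * a)
        - \<i> * of_real (- lam * N) * (of_real na * a))"
proof -
  have B: "B j = \<i> * (of_real (El j) - of_real (ph j))" for j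
  proof -
    have "B j = (of_real (ph j) - of_real (El j)) / \<i>" using F1[of j] by (simp add: field_simps)
    then show ?thesis by (simp add: field_simps)
  qed
  have Ell: "of_real (Ell j l) = - \<i> * C j l - \<i> * C l j + (of_real (ph j) - of_real (El j)) * A l
        + (of_real (ph l) - of_real (El l)) * A j + of_real (axis j 1 $ l)" for j l
    using F2[of j l] by (simp add: algebra_simps)
  have delta: "(\<Sum>l\<in>UNIV. \<Sum>j\<in>UNIV. of_real (phh j l) * (of_real (axis j 1 $ l) :: complex)) = of_real (\<Sum>l\<in>UNIV. phh l l)"
  proof -
    have "(\<Sum>j\<in>UNIV. of_real (phh j l) * (of_real (axis j 1 $ l) :: complex)) = of_real (phh l l)" for l
      by (simp add: axis_def if_distrib cong: if_cong)
    then show ?thesis by simp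
  qed
  have S1: "(\<Sum>l\<in>UNIV. \<Sum>j\<in>UNIV. of_real (phh j l) * C l j) = (\<Sum>l\<in>UNIV. \<Sum>j\<in>UNIV. of_real (phh j l) * C j l)"
    by (rule sum_sym_swap) (simp add: F4)
  have S2: "(\<Sum>l\<in>UNIV. \<Sum>j\<in>UNIV. of_real (phh j l) * ((of_real (ph l) - of_real (El l)) * A j))
     = (\<Sum>l\<in>UNIV. \<Sum>j\<in>UNIV. of_real (phh j l) * ((of_real (ph j) - of_real (El j)) * A l))"
    by (rule sum_sym_swap) (simp add: F4)
  have S3: "(\<Sum>j\<in>UNIV. \<Sum>l\<in>UNIV. of_real (phh l j) * (of_real (El l) * A j))
     = (\<Sum>l\<in>UNIV. \<Sum>j\<in>UNIV. of_real (phh j l) * (of_real (El l) * A j))"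
    by (subst sum.swap) (simp add: F4)
  define s1 where "s1 = (\<Sum>l\<in>UNIV. \<Sum>j\<in>UNIV. of_real (phh j l) * C l j)"
  define s2 where "s2 = (\<Sum>l\<in>UNIV. \<Sum>j\<in>UNIV. of_real (phh j l) * ((of_real (ph l) - of_real (El l)) * A j))"
  have Q3: "(\<Sum>l\<in>UNIV. \<Sum>j\<in>UNIV. of_real (phh j l) * (of_real (Ell j l) :: complex))
     = - 2 * \<i> * s1 + 2 * s2 + of_real (\<Sum>l\<in>UNIV. phh l l)"
  proof -
    have "(\<Sum>l\<in>UNIV. \<Sum>j\<in>UNIV. of_real (phh j l) * (of_real (Ell j l) :: complex))
      = (\<Sum>l\<in>UNIV. \<Sum>j\<in>UNIV. - \<i> * (of_real (phh j l) * C j l) - \<i> * (of_real (phh j l) * C l j)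
          + of_real (phh j l) * ((of_real (ph j) - of_real (El j)) * A l)
          + of_real (phh j l) * ((of_real (ph l) - of_real (El l)) * A j) + of_real (phh j l) * of_real (axis j 1 $ l))"
      unfolding Ell by (simp add: algebra_simps)
    also have "\<dots> = - \<i> * (\<Sum>l\<in>UNIV. \<Sum>j\<in>UNIV. of_real (phh j l) * C j l) - \<i> * s1
        + (\<Sum>l\<in>UNIV. \<Sum>j\<in>UNIV. of_real (phh j l) * ((of_real (ph j) - of_real (El j)) * A l)) + s2
        + (\<Sum>l\<in>UNIV. \<Sum>j\<in>UNIV. of_real (phh j l) * (of_real (axis j 1 $ l) :: complex))"
      unfolding s1_def s2_def by (simp add: sum.distrib sum_subtractf sum_distrib_left)
    also have "\<dots> = - 2 * \<i> * s1 + 2 * s2 + of_real (\<Sum>l\<in>UNIV. phh l l)"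
      unfolding delta using S1 S2 unfolding s1_def s2_def by (simp add: algebra_simps)
    finally show ?thesis .
  qed
  have L: "\<i> * (a * (\<Sum>j\<in>UNIV. of_real (pt j) * A j)) + \<i> * (\<Sum>l\<in>UNIV. of_real (ph l) * (a * (\<Sum>j\<in>UNIV. of_real (phh j l) * A j)))
     = \<i> * a * s2 - \<i> * a * (\<Sum>l\<in>UNIV. A l * of_real (Ul l))"
  proof -
    have "(\<Sum>j\<in>UNIV. of_real (pt j) * A j) = - (\<Sum>j\<in>UNIV. \<Sum>l\<in>UNIV. of_real (phh l j) * (of_real (El l) * A j)) - (\<Sum>l\<in>UNIV. A l * of_real (Ul l))"
    proof -
      have "of_real (pt j) * A j = - (\<Sum>l\<in>UNIV. of_real (phh l j) * (of_real (El l) * A j)) - A j * of_real (Ul j)" for j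
        unfolding F3 by (simp add: sum_distrib_right sum_distrib_left algebra_simps)
      then show ?thesis by (simp add: sum_subtractf sum_negf)
    qed
    also have "\<dots> = - (\<Sum>l\<in>UNIV. \<Sum>j\<in>UNIV. of_real (phh j l) * (of_real (El l) * A j)) - (\<Sum>l\<in>UNIV. A l * of_real (Ul l))"
      unfolding S3 ..
    finally have 1: "(\<Sum>j\<in>UNIV. of_real (pt j) * A j) = - (\<Sum>l\<in>UNIV. \<Sum>j\<in>UNIV. of_real (phh j l) * (of_real (El l) * A j)) - (\<Sum>l\<in>UNIV. A l * of_real (Ul l))" .
    have 2: "(\<Sum>l\<in>UNIV. of_real (ph l) * (a * (\<Sum>j\<in>UNIV. of_real (phh j l) * A j))) = a * (\<Sum>l\<in>UNIV. \<Sum>j\<in>UNIV. of_real (phh j l) * (of_real (ph l) * A j))"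
      by (simp add: sum_distrib_left algebra_simps)
    have 3: "s2 = (\<Sum>l\<in>UNIV. \<Sum>j\<in>UNIV. of_real (phh j l) * (of_real (ph l) * A j)) - (\<Sum>l\<in>UNIV. \<Sum>j\<in>UNIV. of_real (phh j l) * (of_real (El l) * A j))"
      unfolding s2_def by (simp add: algebra_simps sum_subtractf)
    show ?thesis unfolding 1 2 3 by (simp add: algebra_simps)
  qed
  have R: "(\<Sum>l\<in>UNIV. al l * B l) + \<i> * (\<Sum>l\<in>UNIV. of_real (ph l) * al l) = \<i> * (\<Sum>l\<in>UNIV. of_real (El l) * al l)"
    unfolding B by (simp add: algebra_simps sum.distrib[symmetric] sum_distrib_left)
  have "(\<Sum>l\<in>UNIV. \<Sum>j\<in>UNIV. phh j l * Ell j l) = (\<Sum>l\<in>UNIV. \<Sum>j\<in>UNIV. phh j l * Ell j l)" ..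
  have Q3': "of_real (\<Sum>l\<in>UNIV. \<Sum>j\<in>UNIV. phh j l * Ell j l) = - 2 * \<i> * s1 + 2 * s2 + of_real (\<Sum>l\<in>UNIV. phh l l)"
    using Q3 by simp
  have s1a: "(\<Sum>l\<in>UNIV. \<Sum>n\<in>UNIV. a * (C l n * complex_of_real (phh n l))) = a * s1"
    unfolding s1_def by (simp add: sum_distrib_left algebra_simps)
  show ?thesis
    unfolding Q3'
    using L R s1a
    by (simp add: algebra_simps sum.distrib sum_distrib_left)
qed

theorem mainTheorem3:
  fixes b :: "'d::finite \<Rightarrow> real^'d"
    and V U :: "real^'d \<Rightarrow> real"
    and lam :: "real \<Rightarrow> real"
    and \<sigma> n :: nat
    and E :: "nat \<Rightarrow> real^'d \<Rightarrow> real"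
    and chi :: "nat \<Rightarrow> real^'d \<Rightarrow> real^'d \<Rightarrow> complex"
    and \<tau> :: real
    and \<phi> :: "real \<Rightarrow> real^'d \<Rightarrow> real"
    and a0 :: "real \<Rightarrow> real^'d \<Rightarrow> complex"
    and t :: real and x :: "real^'d"
  assumes basis: "independent (range b)" "inj b"
    and V_smooth: "smooth_on UNIV V" and V_per: "periodic b V"
    and U_smooth: "smooth_on UNIV U"
    and lam_smooth: "smooth_on UNIV lam"
    and chi_smooth_y: "\<And>m k. m \<ge> 1 \<Longrightarrow> smooth_on UNIV (\<lambda>y. chi m y k)"
    and chi_per: "\<And>m k. m \<ge> 1 \<Longrightarrow> periodic b (\<lambda>y. chi m y k)"
    and eigen: "\<And>m k. m \<ge> 1 \<Longrightarrow>
        Hk V k (\<lambda>y. chi m y k) = (\<lambda>y. complex_of_real (E m k) * chi m y k)"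
    and orthonormal: "\<And>m m' k. m \<ge> 1 \<Longrightarrow> m' \<ge> 1 \<Longrightarrow>
        l2inner b (\<lambda>y. chi m y k) (\<lambda>y. chi m' y k) = (if m = m' then 1 else 0)"
    and ordered: "\<And>m k. m \<ge> 1 \<Longrightarrow> E m k \<le> E (Suc m) k"
    and complete: "\<And>k f. smooth_on UNIV f \<Longrightarrow> periodic b f \<Longrightarrow>
        (\<forall>m\<ge>1. l2inner b (\<lambda>y. chi m y k) f = 0) \<Longrightarrow> f = (\<lambda>_. 0)"
    and n_pos: "n \<ge> 1"
    and simple_isolated: "\<And>k. (n = 1 \<or> E (n - 1) k < E n k) \<and> E n k < E (Suc n) k"
    and E_smooth: "smooth_on UNIV (E n)"
    and chi_smooth: "smooth_on UNIV (\<lambda>(y, k). chi n y k)"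
    and tau_pos: "\<tau> > 0"
    and phi_smooth: "smooth_on ({0..<\<tau>} \<times> UNIV) (\<lambda>(s, z). \<phi> s z)"
    and eikonal: "\<And>s z. s \<in> {0..<\<tau>} \<Longrightarrow>
        dt \<tau> (\<lambda>s'. \<phi> s' z) s + E n (grad (\<phi> s) z) + U z = 0"
    and a0_smooth: "smooth_on ({0..<\<tau>} \<times> UNIV) (\<lambda>(s, z). a0 s z)"
    and t_in: "t \<in> {0..<\<tau>}"
  shows "integral (fund_dom b)
           (\<lambda>y. cnj (chi n y (grad (\<phi> t) x)) *
                 (L1 \<tau> \<phi> (\<lambda>s z w. a0 s z * chi n w (grad (\<phi> s) z)) t x y
                  - complex_of_real (lam t) * nl \<sigma> (a0 t x * chi n y (grad (\<phi> t) x)))) = 0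
     \<longleftrightarrow>
         dt \<tau> (\<lambda>s. a0 s x) t + Lop (E n) \<phi> a0 t x - beta b (chi n) \<phi> U t x * a0 t x
           = \<i> * complex_of_real (kappa b \<sigma> lam (chi n) \<phi> t x) * nl \<sigma> (a0 t x)"
proof -
  obtain Ti where Ti: "linear Ti" "\<And>c. Ti (Tb b c) = c" "\<And>y. Tb b (Ti y) = y"
    using Tb_iso[OF basis] by blast
  define X where "X = (\<lambda>(y, k). chi n y k)"
  have chiX: "\<And>w k. chi n w k = X (w, k)" by (simp add: X_def)
  have sX: "smooth_on UNIV X" using chi_smooth unfolding X_def .
  have pX: "yper b X"
    using chi_per[OF n_pos] unfolding yper_def periodic_def X_def by simp
  have dV: "\<And>z. V differentiable at z" by (rule smooth_diff_at[OF V_smooth])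
  have cV: "continuous_on UNIV V" by (rule smooth_cont_on[OF V_smooth])
  have eig: "\<And>p. HopP V X p = of_real (E n (snd p)) * X p"
  proof -
    fix p :: "(real^'d) \<times> (real^'d)"
    obtain y k where p: "p = (y, k)" by (cases p)
    have "Hk V k (\<lambda>y. X (y,k)) y = HopP V X (y,k)" by (rule Hk_slice[OF sX])
    moreover have "(\<lambda>y. X (y,k)) = (\<lambda>y. chi n y k)" by (simp add: X_def)
    ultimately show "HopP V X p = of_real (E n (snd p)) * X p"
      using eigen[OF n_pos, of k] p by (simp add: X_def)
  qed
  have nrm: "\<And>k. integral (fund_dom b) (\<lambda>y. cnj (X (y,k)) * X (y,k)) = 1"
    using orthonormal[OF n_pos n_pos] by (simp add: l2inner_def X_def)
  note ctx = Ti sX pX dV cV E_smooth eig nrm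

  have Lpt: "L1 \<tau> \<phi> (\<lambda>s z w. a0 s z * chi n w (grad (\<phi> s) z)) t x y = \<i> * (dt \<tau> (\<lambda>s. a0 s x) t * X (y, grad (\<phi> t) x) + a0 t x * (\<Sum>j\<in>UNIV. of_real (dt \<tau> (\<lambda>s. pd (\<phi> s) x j) t) * dd [ek j] X (y, grad (\<phi> t) x))) + \<i> * (\<Sum>l\<in>UNIV. of_real (pd (\<phi> t) x l) * (pd (a0 t) x l * X (y, grad (\<phi> t) x) + a0 t x * (\<Sum>j\<in>UNIV. of_real (pd (\<lambda>x'. pd (\<phi> t) x' j) x l) * dd [ek j] X (y, grad (\<phi> t) x)))) + \<i> / 2 * of_real (\<Sum>l\<in>UNIV. pd (\<lambda>x'. pd (\<phi> t) x' l) x l) * (a0 t x * X (y, grad (\<phi> t) x)) + (\<Sum>l\<in>UNIV. pd (a0 t) x l * dd [ey l] X (y, grad (\<phi> t) x) + a0 t x * (\<Sum>j\<in>UNIV. of_real (pd (\<lambda>x'. pd (\<phi> t) x' j) x l) * dd [ek j, ey l] X (y, grad (\<phi> t) x)))" for y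
  proof -
    note T1' = T1[OF tau_pos phi_smooth a0_smooth sX t_in, where x = x and y = y]
    note T2' = T2[OF tau_pos phi_smooth a0_smooth sX t_in, where x = x and y = y]
    note T4' = T4[OF tau_pos phi_smooth a0_smooth sX t_in, where x = x and y = y]
    show ?thesis unfolding L1_def chiX lap_def by (simp only: T1' T2' T4')
  qed
  have nlp: "cnj z * (of_real l * nl \<sigma> (c * z)) = of_real l * (of_real (cmod c ^ (2 * \<sigma>)) * c * of_real (cmod z ^ (2 * \<sigma> + 2)))" for z c :: complex and l :: real
  proof -
    have "cnj z * z = of_real (cmod z ^ 2)" using complex_norm_square[of z] by (simp add: mult.commute)
    then show ?thesis unfolding nl_def by (simp add: norm_mult power_mult_distrib power_add power2_eq_square algebra_simps)
  qed
  have hX1: "((\<lambda>y. cnj (X (y, grad (\<phi> t) x)) * X (y, grad (\<phi> t) x)) has_integral 1) (fund_dom b)"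
    by (rule hasX[OF ctx])
  have hI: "((\<lambda>y. cnj (X (y, grad (\<phi> t) x)) * dd vs X (y, grad (\<phi> t) x)) has_integral Ip b X (dd vs X) (grad (\<phi> t) x)) (fund_dom b)" for vs
    by (rule hasI[OF ctx smooth_dd[OF sX]])
  have hN: "((\<lambda>y. complex_of_real (cmod (X (y, grad (\<phi> t) x)) ^ (2 * \<sigma> + 2))) has_integral of_real (integral (fund_dom b) (\<lambda>y. cmod (chi n y (grad (\<phi> t) x)) ^ (2 * \<sigma> + 2)))) (fund_dom b)"
  proof -
    have c: "continuous_on UNIV (\<lambda>y. cmod (chi n y (grad (\<phi> t) x)) ^ (2 * \<sigma> + 2))"
      using cont_sl[OF sX] unfolding chiX by (intro continuous_intros) auto
    have "(\<lambda>y. cmod (chi n y (grad (\<phi> t) x)) ^ (2 * \<sigma> + 2)) integrable_on fund_dom b"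
      using cont_integrable[OF c Rset_bounded[OF Ti] Rset_borel[OF Ti]] fund_dom_Rset[OF Ti] by metis
    from has_integral_linear[OF integrable_integral[OF this] bounded_linear_of_real]
    show ?thesis by (simp add: o_def chiX)
  qed
  have hg: "((\<lambda>y. \<i> * (dt \<tau> (\<lambda>s. a0 s x) t * (cnj (X (y, grad (\<phi> t) x)) * X (y, grad (\<phi> t) x)) + a0 t x * (\<Sum>j\<in>UNIV. of_real (dt \<tau> (\<lambda>s. pd (\<phi> s) x j) t) * (cnj (X (y, grad (\<phi> t) x)) * dd [ek j] X (y, grad (\<phi> t) x)))) + \<i> * (\<Sum>l\<in>UNIV. of_real (pd (\<phi> t) x l) * (pd (a0 t) x l * (cnj (X (y, grad (\<phi> t) x)) * X (y, grad (\<phi> t) x)) + a0 t x * (\<Sum>j\<in>UNIV. of_real (pd (\<lambda>x'. pd (\<phi> t) x' j) x l) * (cnj (X (y, grad (\<phi> t) x)) * dd [ek j] X (y, grad (\<phi> t) x))))) + \<i> / 2 * of_real (\<Sum>l\<in>UNIV. pd (\<lambda>x'. pd (\<phi> t) x' l) x l) * (a0 t x * (cnj (X (y, grad (\<phi> t) x)) * X (y, grad (\<phi> t) x))) + (\<Sum>l\<in>UNIV. pd (a0 t) x l * (cnj (X (y, grad (\<phi> t) x)) * dd [ey l] X (y, grad (\<phi> t) x)) + a0 t x * (\<Sum>j\<in>UNIV. of_real (pd (\<lambda>x'. pd (\<phi> t) x' j) x l) * (cnj (X (y, grad (\<phi> t) x)) * dd [ek j, ey l] X (y, grad (\<phi>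 t) x)))) - of_real (lam t) * (of_real (cmod (a0 t x) ^ (2 * \<sigma>)) * a0 t x * of_real (cmod (X (y, grad (\<phi> t) x)) ^ (2 * \<sigma> + 2)))) has_integral (\<i> * (dt \<tau> (\<lambda>s. a0 s x) t * 1 + a0 t x * (\<Sum>j\<in>UNIV. of_real (dt \<tau> (\<lambda>s. pd (\<phi> s) x j) t) * Ip b X (dd [ek j] X) (grad (\<phi> t) x))) + \<i> * (\<Sum>l\<in>UNIV. of_real (pd (\<phi> t) x l) * (pd (a0 t) x l * 1 + a0 t x * (\<Sum>j\<in>UNIV. of_real (pd (\<lambda>x'. pd (\<phi> t) x' j) x l) * Ip b X (dd [ek j] X) (grad (\<phi> t) x)))) + \<i> / 2 * of_real (\<Sum>l\<in>UNIV. pd (\<lambda>x'. pd (\<phi> t) x' l) x l) * (a0 t x * 1) + (\<Sum>l\<in>UNIV. pd (a0 t) x l * Ip b X (dd [ey l] X) (grad (\<phi> t) x) + a0 t x * (\<Sum>j\<in>UNIV. of_real (pd (\<lambda>x'. pd (\<phi> t) x' j) x l) * Ip b X (dd [ek j, ey l] X) (grad (\<phi> t) x))) - of_real (lam t) * (of_real (cmod (a0 t x) ^ (2 * \<sigma>)) * a0 t x * of_real (integral (fund_dom b) (\<lambda>y. cmod (chi n y (grad (\<phi> t) x)) ^ (2 * \<sigma> + 2)))))) (fund_dom b)"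
    by (intro has_integral_add has_integral_diff has_integral_mult_right has_integral_sum hX1 hI hN) auto
  have fg: "cnj (chi n y (grad (\<phi> t) x)) * (L1 \<tau> \<phi> (\<lambda>s z w. a0 s z * chi n w (grad (\<phi> s) z)) t x y
       - complex_of_real (lam t) * nl \<sigma> (a0 t x * chi n y (grad (\<phi> t) x))) = \<i> * (dt \<tau> (\<lambda>s. a0 s x) t * (cnj (X (y, grad (\<phi> t) x)) * X (y, grad (\<phi> t) x)) + a0 t x * (\<Sum>j\<in>UNIV. of_real (dt \<tau> (\<lambda>s. pd (\<phi> s) x j) t) * (cnj (X (y, grad (\<phi> t) x)) * dd [ek j] X (y, grad (\<phi> t) x)))) + \<i> * (\<Sum>l\<in>UNIV. of_real (pd (\<phi> t) x l) * (pd (a0 t) x l * (cnj (X (y, grad (\<phi> t) x)) * X (y, grad (\<phi> t) x)) + a0 t x * (\<Sum>j\<in>UNIV. of_real (pd (\<lambda>x'. pd (\<phi> t) x' j) x l) * (cnj (X (y, grad (\<phi> t) x)) * dd [ek j] X (y, grad (\<phi> t) x))))) + \<i> / 2 * of_real (\<Sum>l\<in>UNIV. pd (\<lambda>x'. pd (\<phi> t) x' l) x l) * (a0 t x * (cnj (X (y, grad (\<phi> t) x)) * X (y, grad (\<phi> t) x))) + (\<Sum>l\<in>UNIV. pd (a0 t) x l * (cnj (X (y, grad (\<phi> t) x)) * dd [ey l] X (y, grad (\<phi> t) x)) + a0 t x * (\<Sum>j\<in>UNIV. of_real (pd (\<lambda>x'. pd (\<phi> t) x' j) x l) * (cnj (X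 (y, grad (\<phi> t) x)) * dd [ek j, ey l] X (y, grad (\<phi> t) x)))) - of_real (lam t) * (of_real (cmod (a0 t x) ^ (2 * \<sigma>)) * a0 t x * of_real (cmod (X (y, grad (\<phi> t) x)) ^ (2 * \<sigma> + 2)))" for y
    unfolding Lpt unfolding chiX right_diff_distrib nlp
    by (simp add: algebra_simps sum_distrib_left)
  have intP: "integral (fund_dom b) (\<lambda>y. cnj (chi n y (grad (\<phi> t) x)) * (L1 \<tau> \<phi> (\<lambda>s z w. a0 s z * chi n w (grad (\<phi> s) z)) t x y
       - complex_of_real (lam t) * nl \<sigma> (a0 t x * chi n y (grad (\<phi> t) x)))) = \<i> * (dt \<tau> (\<lambda>s. a0 s x) t * 1 + a0 t x * (\<Sum>j\<in>UNIV. of_real (dt \<tau> (\<lambda>s. pd (\<phi> s) x j) t) * Ip b X (dd [ek j] X) (grad (\<phi> t) x))) + \<i> * (\<Sum>l\<in>UNIV. of_real (pd (\<phi> t) x l) * (pd (a0 t) x l * 1 + a0 t x * (\<Sum>j\<in>UNIV. of_real (pd (\<lambda>x'. pd (\<phi> t) x' j) x l) * Ip b X (dd [ek j] X) (grad (\<phi> t) x)))) + \<i> / 2 * of_real (\<Sum>l\<in>UNIV. pd (\<lambda>x'. pd (\<phi> t) x' l) x l) * (a0 t x * 1) + (\<Sum>l\<in>UNIV. pd (a0 t) x l * Ip b X (dd [ey l] X) (grad (\<phi> t) x) + a0 t x * (\<Sum>j\<in>UNIV. of_real (pd (\<lambda>x'. pd (\<phi> t) x' j) x l) * Ip b X (dd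 [ek j, ey l] X) (grad (\<phi> t) x))) - of_real (lam t) * (of_real (cmod (a0 t x) ^ (2 * \<sigma>)) * a0 t x * of_real (integral (fund_dom b) (\<lambda>y. cmod (chi n y (grad (\<phi> t) x)) ^ (2 * \<sigma> + 2))))"
  proof -
    have "((\<lambda>y. cnj (chi n y (grad (\<phi> t) x)) * (L1 \<tau> \<phi> (\<lambda>s z w. a0 s z * chi n w (grad (\<phi> s) z)) t x y
       - complex_of_real (lam t) * nl \<sigma> (a0 t x * chi n y (grad (\<phi> t) x)))) has_integral \<i> * (dt \<tau> (\<lambda>s. a0 s x) t * 1 + a0 t x * (\<Sum>j\<in>UNIV. of_real (dt \<tau> (\<lambda>s. pd (\<phi> s) x j) t) * Ip b X (dd [ek j] X) (grad (\<phi> t) x))) + \<i> * (\<Sum>l\<in>UNIV. of_real (pd (\<phi> t) x l) * (pd (a0 t) x l * 1 + a0 t x * (\<Sum>j\<in>UNIV. of_real (pd (\<lambda>x'. pd (\<phi> t) x' j) x l) * Ip b X (dd [ek j] X) (grad (\<phi> t) x)))) + \<i> / 2 * of_real (\<Sum>l\<in>UNIV. pd (\<lambda>x'. pd (\<phi> t) x' l) x l) * (a0 t x * 1) + (\<Sum>l\<in>UNIV. pd (a0 t) x l * Ip b X (dd [ey l] X) (grad (\<phi> t) x) + a0 t x * (\<Sum>j\<in>UNIV. of_real (pd (\<lambda>x'. pd (\<phi> t) x' j) x l) * Ip b X (dd [ek j, ey l] X) (grad (\<phi> t) x))) - of_real (lam t) * (of_real (cmod (a0 t x) ^ (2 * \<sigma>))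 * a0 t x * of_real (integral (fund_dom b) (\<lambda>y. cmod (chi n y (grad (\<phi> t) x)) ^ (2 * \<sigma> + 2))))) (fund_dom b)"
      by (rule has_integral_eq[OF _ hg]) (rule fg[symmetric])
    then show ?thesis by (rule integral_unique)
  qed

  have dU: "\<And>z. U differentiable at z" by (rule smooth_diff_at[OF U_smooth])
  have pdE: "\<And>k l. pd (E n) k l = dd [axis l 1] (E n) k"
    using pd_frechet[OF smooth_diff_at[OF E_smooth]] by (simp add: dderiv.simps)
  have pdLop: "pd (\<lambda>x'. pd (E n) (grad (\<phi> t) x') l) x l
      = (\<Sum>j\<in>UNIV. pd (\<lambda>x'. pd (\<phi> t) x' j) x l * dd [axis j 1, axis l 1] (E n) (grad (\<phi> t) x))" for l
  proof -
    have "pd (\<lambda>x'. pd (E n) (grad (\<phi> t) x') l) x l = pd (\<lambda>x'. dd [axis l 1] (E n) (grad (\<phi> t) x')) x l"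
      by (simp only: pdE)
    also have "\<dots> = (\<Sum>j\<in>UNIV. pd (\<lambda>x'. pd (\<phi> t) x' j) x l * dd [axis j 1, axis l 1] (E n) (grad (\<phi> t) x))"
      unfolding chainR[OF smooth_dd[OF E_smooth] G2[OF tau_pos phi_smooth t_in, of x]]
      by (simp add: G3[OF tau_pos phi_smooth t_in] dderiv_app)
    finally show ?thesis .
  qed
  have chiF: "chi n = (\<lambda>y k. X (y, k))" by (auto simp: X_def)
  have betaeq: "beta b (chi n) \<phi> U t x = (\<Sum>l\<in>UNIV. Ip b X (dd [ek l] X) (grad (\<phi> t) x) * of_real (pd U x l))"
    unfolding beta_def l2inner_def chiF by (simp add: pd_sl_k'[OF sX] integral_unique[OF hI])
  have F1: "- \<i> * Ip b X (dd [ey j] X) (grad (\<phi> t) x) + of_real (pd (\<phi> t) x j) - of_real (dd [axis j 1] (E n) (grad (\<phi> t) x)) = 0" for j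
    using FH1[OF ctx, of j "grad (\<phi> t) x"] by (simp add: grad_def)
  have F2: "- \<i> * Ip b X (dd [ek j, ey m] X) (grad (\<phi> t) x) - \<i> * Ip b X (dd [ek m, ey j] X) (grad (\<phi> t) x)
    + (of_real (pd (\<phi> t) x m) - of_real (dd [axis m 1] (E n) (grad (\<phi> t) x))) * Ip b X (dd [ek j] X) (grad (\<phi> t) x)
    + (of_real (pd (\<phi> t) x j) - of_real (dd [axis j 1] (E n) (grad (\<phi> t) x))) * Ip b X (dd [ek m] X) (grad (\<phi> t) x)
    + of_real (axis m 1 $ j) - of_real (dd [axis m 1, axis j 1] (E n) (grad (\<phi> t) x)) = 0" for m j
    using FH2[OF ctx, of m j "grad (\<phi> t) x"] dd_swap1[OF sX, of "ey m" "ek j"] by (simp add: grad_def)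
  have F3: "dt \<tau> (\<lambda>s. pd (\<phi> s) x j) t = - (\<Sum>l\<in>UNIV. pd (\<lambda>x'. pd (\<phi> t) x' l) x j * dd [axis l 1] (E n) (grad (\<phi> t) x)) - pd U x j" for j
    by (rule G6[OF tau_pos phi_smooth t_in E_smooth dU eikonal])
  have F4: "pd (\<lambda>x'. pd (\<phi> t) x' j) x l = pd (\<lambda>x'. pd (\<phi> t) x' l) x j" for j l
    by (rule G3sym[OF tau_pos phi_smooth t_in])
  note FA = final_algebra[where c_at = "dt \<tau> (\<lambda>s. a0 s x) t" and a = "a0 t x" and al = "\<lambda>l. pd (a0 t) x l"
      and A = "\<lambda>j. Ip b X (dd [ek j] X) (grad (\<phi> t) x)" and B = "\<lambda>l. Ip b X (dd [ey l] X) (grad (\<phi> t) x)"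
      and C = "\<lambda>l j. Ip b X (dd [ek j, ey l] X) (grad (\<phi> t) x)" and ph = "\<lambda>l. pd (\<phi> t) x l"
      and El = "\<lambda>l. dd [axis l 1] (E n) (grad (\<phi> t) x)" and Ul = "\<lambda>l. pd U x l"
      and pt = "\<lambda>j. dt \<tau> (\<lambda>s. pd (\<phi> s) x j) t" and phh = "\<lambda>j l. pd (\<lambda>x'. pd (\<phi> t) x' j) x l"
      and Ell = "\<lambda>j l. dd [axis j 1, axis l 1] (E n) (grad (\<phi> t) x)" and lam = "lam t"
      and N = "integral (fund_dom b) (\<lambda>y. cmod (chi n y (grad (\<phi> t) x)) ^ (2 * \<sigma> + 2))"
      and na = "cmod (a0 t x) ^ (2 * \<sigma>)", OF F1 F2 F3 F4]
  have LHSXeq: "dt \<tau> (\<lambda>s. a0 s x) t + Lop (E n) \<phi> a0 t x - beta b (chi n) \<phi> U t x * a0 t x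
     = dt \<tau> (\<lambda>s. a0 s x) t + ((\<Sum>l\<in>UNIV. of_real (dd [axis l 1] (E n) (grad (\<phi> t) x)) * pd (a0 t) x l)
        + 1/2 * of_real (\<Sum>l\<in>UNIV. \<Sum>j\<in>UNIV. pd (\<lambda>x'. pd (\<phi> t) x' j) x l * dd [axis j 1, axis l 1] (E n) (grad (\<phi> t) x)) * a0 t x)
        - (\<Sum>l\<in>UNIV. Ip b X (dd [ek l] X) (grad (\<phi> t) x) * of_real (pd U x l)) * a0 t x"
    unfolding Lop_def betaeq pdLop by (simp add: pdE)
  have Req: "\<i> * complex_of_real (kappa b \<sigma> lam (chi n) \<phi> t x) * nl \<sigma> (a0 t x)
     = \<i> * of_real (- lam t * integral (fund_dom b) (\<lambda>y. cmod (chi n y (grad (\<phi> t) x)) ^ (2 * \<sigma> + 2)))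
        * (of_real (cmod (a0 t x) ^ (2 * \<sigma>)) * a0 t x)"
    by (simp add: kappa_def nl_def)
  note e = trans[OF intP FA]
  show ?thesis
    unfolding e LHSXeq Req by (simp only: mult_eq_0_iff complex_i_not_zero right_minus_eq simp_thms)
qed

end
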